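(* Let $\mathbb{Q}^*_+$ act on the ring $\mathcal{A}_f$ of finite adeles by division, $r\cdot a=r^{-1}a$, and let $\mathcal{Q}(\mathcal{A}_f/\mathbb{Q}^*_+)$ be the quasi-orbit space of this action. For each $a\in\mathcal{A}_f$ define $S(a):=\{p\in\mathcal{P}: a_p=0\}$. Then $S(a)$ depends only on the quasi-orbit of $a$, and the map $a\mapsto S(a)$ induces a homeomorphism of $\mathcal{Q}(\mathcal{A}_f/\mathbb{Q}^*_+)$ onto the power set $2^{\mathcal{P}}$ equipped with the power-cofinite topology.
   Context: $\mathcal{P}$ is the set of prime numbers; $\mathcal{A}_f=\{(a_p)\in\prod_p\mathbb{Q}_p: a_p\in\mathbb{Z}_p \text{ for almost all } p\}$ is the ring of finite adeles with the restricted product topology (neighbourhood base at $0$ given by $\prod_{p\in F}V_p\times\prod_{p\notin F}\mathbb{Z}_p$, $F$ finite, $V_p$ a neighbourhood of $0$ in $\mathbb{Q}_p$), and $\mathbb{Q}$ is diagonally embedded. For a group $G$ acting on a space $X$, the quasi-orbit space $\mathcal{Q}(X/G)$ is the quotient of $X$ by the relation $x\sim y \iff \overline{G\cdot x}=\overline{G\cdot y}$, with the quotient topology. The power-cofinite topology on $2^{\mathcal{P}}$ has as basic open sets $U_G=\{T\subseteq\mathcal{P}: T\cap G=\emptyset\}$ for $G$ ranging over finite subsets of $\mathcal{P}$. *)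

theory Defs
  imports "HOL-Analysis.Analysis" "HOL-Computational_Algebra.Primes"
begin

definition pval :: "nat \<Rightarrow> rat \<Rightarrow> int" where
  "pval p r = (case quotient_of r of (a, b) \<Rightarrow>
      int (multiplicity (int p) a) - int (multiplicity (int p) b))"

definition pabs :: "nat \<Rightarrow> rat \<Rightarrow> real" where
  "pabs p r = (if r = 0 then 0 else real p powr (- real_of_int (pval p r)))"

definition p_cauchy :: "nat \<Rightarrow> (nat \<Rightarrow> rat) \<Rightarrow> bool" where
  "p_cauchy p s \<longleftrightarrow> (\<forall>e>0. \<exists>N. \<forall>m\<ge>N. \<forall>n\<ge>N. pabs p (s m - s n) < e)"

definition p_equiv :: "nat \<Rightarrow> (nat \<Rightarrow> rat) \<Rightarrow> (nat \<Rightarrow> rat) \<Rightarrow> bool" where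
  "p_equiv p s t \<longleftrightarrow> (\<lambda>n. pabs p (s n - t n)) \<longlonglongrightarrow> 0"

definition pclass :: "nat \<Rightarrow> (nat \<Rightarrow> rat) \<Rightarrow> (nat \<Rightarrow> rat) set" where
  "pclass p s = {t. p_cauchy p t \<and> p_equiv p s t}"

definition Qp :: "nat \<Rightarrow> (nat \<Rightarrow> rat) set set" where
  "Qp p = {X. \<exists>s. p_cauchy p s \<and> X = pclass p s}"

definition prep :: "(nat \<Rightarrow> rat) set \<Rightarrow> (nat \<Rightarrow> rat)" where
  "prep X = (SOME s. s \<in> X)"

definition pzero :: "nat \<Rightarrow> (nat \<Rightarrow> rat) set" where
  "pzero p = pclass p (\<lambda>n. 0)"

definition pconst :: "nat \<Rightarrow> rat \<Rightarrow> (nat \<Rightarrow> rat) set" where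
  "pconst p r = pclass p (\<lambda>n. r)"

definition padd :: "nat \<Rightarrow> (nat \<Rightarrow> rat) set \<Rightarrow> (nat \<Rightarrow> rat) set \<Rightarrow> (nat \<Rightarrow> rat) set" where
  "padd p X Y = pclass p (\<lambda>n. prep X n + prep Y n)"

definition pmul :: "nat \<Rightarrow> (nat \<Rightarrow> rat) set \<Rightarrow> (nat \<Rightarrow> rat) set \<Rightarrow> (nat \<Rightarrow> rat) set" where
  "pmul p X Y = pclass p (\<lambda>n. prep X n * prep Y n)"

definition pnorm :: "nat \<Rightarrow> (nat \<Rightarrow> rat) set \<Rightarrow> real" where
  "pnorm p X = lim (\<lambda>n. pabs p (prep X n))"

definition Zp :: "nat \<Rightarrow> (nat \<Rightarrow> rat) set set" where
  "Zp p = {X \<in> Qp p. pnorm p X \<le> 1}"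

definition qp_nhd0 :: "nat \<Rightarrow> (nat \<Rightarrow> rat) set set \<Rightarrow> bool" where
  "qp_nhd0 p V \<longleftrightarrow> V \<subseteq> Qp p \<and> (\<exists>e>0. {x \<in> Qp p. pnorm p x < e} \<subseteq> V)"

type_synonym adele = "nat \<Rightarrow> (nat \<Rightarrow> rat) set"

text \<open>Elements of prod_p Q_p indexed by primes; at non-primes the entry is fixed to the empty set.\<close>
definition Af :: "adele set" where
  "Af = {a. (\<forall>p. prime p \<longrightarrow> a p \<in> Qp p) \<and> (\<forall>p. \<not> prime p \<longrightarrow> a p = {})
            \<and> finite {p. prime p \<and> a p \<notin> Zp p}}"

definition af_add :: "adele \<Rightarrow> adele \<Rightarrow> adele" where
  "af_add a b = (\<lambda>p. if prime p then padd p (a p) (b p) else {})"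

definition af_mul :: "adele \<Rightarrow> adele \<Rightarrow> adele" where
  "af_mul a b = (\<lambda>p. if prime p then pmul p (a p) (b p) else {})"

definition af_diag :: "rat \<Rightarrow> adele" where
  "af_diag r = (\<lambda>p. if prime p then pconst p r else {})"

definition af_nbhd :: "nat set \<Rightarrow> (nat \<Rightarrow> (nat \<Rightarrow> rat) set set) \<Rightarrow> adele set" where
  "af_nbhd F V = {b \<in> Af. (\<forall>p\<in>F. b p \<in> V p) \<and> (\<forall>p. prime p \<and> p \<notin> F \<longrightarrow> b p \<in> Zp p)}"

text \<open>Restricted product topology (translates of the basic neighbourhoods of 0).\<close>
definition Af_top :: "adele topology" where
  "Af_top = topology (\<lambda>U. U \<subseteq> Af \<and>
     (\<forall>a\<in>U. \<exists>F V. finite F \<and> F \<subseteq> {p. prime p} \<and> (\<forall>p\<in>F. qp_nhd0 p (V p))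
        \<and> af_add a ` af_nbhd F V \<subseteq> U))"

definition div_action :: "rat \<Rightarrow> adele \<Rightarrow> adele" where
  "div_action r a = af_mul (af_diag (inverse r)) a"

definition S_zero :: "adele \<Rightarrow> nat set" where
  "S_zero a = {p. prime p \<and> a p = pzero p}"

definition qo_rel :: "'a topology \<Rightarrow> 'g set \<Rightarrow> ('g \<Rightarrow> 'a \<Rightarrow> 'a) \<Rightarrow> ('a \<times> 'a) set" where
  "qo_rel X G act = {(x, y). x \<in> topspace X \<and> y \<in> topspace X \<and>
      X closure_of ((\<lambda>g. act g x) ` G) = X closure_of ((\<lambda>g. act g y) ` G)}"

definition quasi_orbit_space :: "'a topology \<Rightarrow> 'g set \<Rightarrow> ('g \<Rightarrow> 'a \<Rightarrow> 'a) \<Rightarrow> 'a set topology" where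
  "quasi_orbit_space X G act = topology (\<lambda>W. W \<subseteq> topspace X // qo_rel X G act \<and> openin X (\<Union>W))"

definition power_cofinite :: "nat set topology" where
  "power_cofinite = topology (\<lambda>W. W \<subseteq> Pow {p. prime p} \<and>
     (\<forall>T\<in>W. \<exists>G. finite G \<and> G \<subseteq> {p. prime p} \<and> T \<inter> G = {} \<and>
        {T' \<in> Pow {p. prime p}. T' \<inter> G = {}} \<subseteq> W))"

end

theory Submission
  imports Defs "HOL-Computational_Algebra.Squarefree"
begin


lemma prime_int_of: "prime (p::nat) \<Longrightarrow> prime_elem (int p)"
  by simp

lemma pval_frac:
  assumes p: "prime p" and a: "a \<noteq> 0" and b: "b \<noteq> 0"
  shows "pval p (of_int a / of_int b) = int (multiplicity (int p) a) - int (multiplicity (int p) b)"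
proof -
  obtain n d where q: "quotient_of (of_int a / of_int b) = (n, d)" by (cases "quotient_of (of_int a / of_int b :: rat)") auto
  have d: "d > 0" using q quotient_of_denom_pos by blast
  have r: "(of_int a / of_int b :: rat) = of_int n / of_int d" using q quotient_of_div by blast
  have "n \<noteq> 0" using r a b d by auto
  have "of_int (n * b) = (of_int (a * d) :: rat)" using r b d by (simp add: field_simps)
  hence e: "n * b = a * d" by (simp only: of_int_eq_iff)
  have pe: "prime_elem (int p)" using p by simp
  have "multiplicity (int p) (n*b) = multiplicity (int p) (a*d)" using e by simp
  hence "multiplicity (int p) n + multiplicity (int p) b = multiplicity (int p) a + multiplicity (int p) d"
    using prime_elem_multiplicity_mult_distrib[OF pe] \<open>n \<noteq> 0\<close> a b d by simp
  thus ?thesis unfolding pval_def q by simp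
qed

lemma rat_as_frac: fixes x :: rat obtains a b :: int where "b > 0" "x = of_int a / of_int b"
proof -
  obtain a b where q: "quotient_of x = (a, b)" by (cases "quotient_of x") auto
  show ?thesis using that[of b a] quotient_of_denom_pos[OF q] quotient_of_div[OF q] by blast
qed

lemma pval_mult:
  assumes p: "prime p" and x: "x \<noteq> 0" and y: "y \<noteq> 0"
  shows "pval p (x * y) = pval p x + pval p y"
proof -
  obtain a b where ab: "b > 0" "x = of_int a / of_int b" by (rule rat_as_frac)
  obtain c d where cd: "d > 0" "y = of_int c / of_int d" by (rule rat_as_frac)
  have a: "a \<noteq> 0" using x ab by auto
  have c: "c \<noteq> 0" using y cd by auto
  have "x * y = of_int (a*c) / of_int (b*d)" using ab cd by simp
  moreover have pe: "prime_elem (int p)" using p by simp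
  ultimately have "pval p (x*y) = int (multiplicity (int p) (a*c)) - int (multiplicity (int p) (b*d))"
    using pval_frac[OF p, of "a*c" "b*d"] ab cd a c by simp
  also have "\<dots> = pval p x + pval p y"
    using pval_frac[OF p a, of b] pval_frac[OF p c, of d] ab cd a c
    prime_elem_multiplicity_mult_distrib[OF pe] by simp
  finally show ?thesis .
qed

lemma mult_add_ge:
  assumes p: "prime p" and "(u::int) + v \<noteq> 0" "u \<noteq> 0" "v \<noteq> 0"
  shows "multiplicity (int p) (u + v) \<ge> min (multiplicity (int p) u) (multiplicity (int p) v)"
proof -
  let ?k = "min (multiplicity (int p) u) (multiplicity (int p) v)"
  have nu: "\<not> is_unit (int p)" using p prime_gt_1_nat by fastforce
  have "int p ^ ?k dvd u" by (rule multiplicity_dvd') simp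
  moreover have "int p ^ ?k dvd v" by (rule multiplicity_dvd') simp
  ultimately have "int p ^ ?k dvd u + v" by simp
  thus ?thesis using multiplicity_geI[OF assms(2) nu] by blast
qed

lemma pval_add:
  assumes p: "prime p" and x: "x \<noteq> 0" and y: "y \<noteq> 0" and xy: "x + y \<noteq> 0"
  shows "pval p (x + y) \<ge> min (pval p x) (pval p y)"
proof -
  obtain a b where ab: "b > 0" "x = of_int a / of_int b" by (rule rat_as_frac)
  obtain c d where cd: "d > 0" "y = of_int c / of_int d" by (rule rat_as_frac)
  have a: "a \<noteq> 0" using x ab by auto
  have c: "c \<noteq> 0" using y cd by auto
  have s: "x + y = of_int (a*d + c*b) / of_int (b*d)" using ab cd by (simp add: field_simps)
  have nz: "a*d + c*b \<noteq> 0"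
  proof
    assume "a*d + c*b = 0"
    hence "(of_int (a*d + c*b) :: rat) = 0" by simp
    thus False using xy s by simp
  qed
  have pe: "prime_elem (int p)" using p by simp
  let ?m = "\<lambda>z. int (multiplicity (int p) z)"
  have "multiplicity (int p) (a*d + c*b) \<ge> min (multiplicity (int p) (a*d)) (multiplicity (int p) (c*b))"
    by (rule mult_add_ge[OF p nz]) (use a c ab cd in simp_all)
  hence "?m (a*d + c*b) \<ge> min (?m a + ?m d) (?m c + ?m b)"
    using prime_elem_multiplicity_mult_distrib[OF pe] a c ab cd by auto
  moreover have "pval p (x+y) = ?m (a*d + c*b) - ?m (b*d)"
    using pval_frac[OF p nz, of "b*d"] s ab cd by simp
  moreover have "?m (b*d) = ?m b + ?m d"
    using prime_elem_multiplicity_mult_distrib[OF pe, of b d] ab cd by simp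
  moreover have "pval p x = ?m a - ?m b" using pval_frac[OF p a] ab by simp
  moreover have "pval p y = ?m c - ?m d" using pval_frac[OF p c] cd by simp
  ultimately show ?thesis by linarith
qed

lemma pval_uminus: assumes p: "prime p" shows "pval p (- x) = pval p x"
proof (cases "x = 0")
  case False
  obtain a b where ab: "b > 0" "x = of_int a / of_int b" by (rule rat_as_frac)
  have a: "a \<noteq> 0" using False ab by auto
  have "- x = of_int (-a) / of_int b" using ab by simp
  thus ?thesis using pval_frac[OF p a] pval_frac[OF p, of "-a" b] a ab by simp
qed simp

lemma pval_int: assumes p: "prime p" and "z \<noteq> 0" shows "pval p (of_int z) = int (multiplicity (int p) z)"
  using pval_frac[OF p assms(2), of 1] by simp


lemma pabs_nonneg: "pabs p r \<ge> 0"
  unfolding pabs_def by simp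

lemma pabs_0[simp]: "pabs p 0 = 0"
  unfolding pabs_def by simp

lemma pabs_nz: "prime p \<Longrightarrow> r \<noteq> 0 \<Longrightarrow> pabs p r = real p powr (- real_of_int (pval p r))"
  unfolding pabs_def by simp

lemma pabs_pos: "prime p \<Longrightarrow> r \<noteq> 0 \<Longrightarrow> pabs p r > 0"
  unfolding pabs_def using prime_gt_0_nat by simp

lemma pabs_eq_0_iff[simp]: "prime p \<Longrightarrow> pabs p r = 0 \<longleftrightarrow> r = 0"
  using pabs_pos[of p r] by (cases "r = 0") auto

lemma pabs_mult: assumes p: "prime p" shows "pabs p (x * y) = pabs p x * pabs p y"
proof (cases "x = 0 \<or> y = 0")
  case False
  hence "x * y \<noteq> 0" by simp
  thus ?thesis using False p pval_mult[OF p, of x y]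
    by (simp add: pabs_nz powr_add[symmetric] algebra_simps)
qed auto

lemma pabs_uminus: "prime p \<Longrightarrow> pabs p (- x) = pabs p x"
  unfolding pabs_def using pval_uminus by simp

lemma pabs_minus_commute: "prime p \<Longrightarrow> pabs p (x - y) = pabs p (y - x)"
  using pabs_uminus[of p "x - y"] by simp

lemma pabs_ultra: assumes p: "prime p" shows "pabs p (x + y) \<le> max (pabs p x) (pabs p y)"
proof (cases "x = 0 \<or> y = 0 \<or> x + y = 0")
  case True
  then show ?thesis by (elim disjE) (auto simp: le_max_iff_disj pabs_nonneg)
next
  case False
  hence v: "pval p (x + y) \<ge> min (pval p x) (pval p y)" using pval_add[OF p] by auto
  have p1: "real p \<ge> 1" using prime_gt_0_nat[OF p] by simp
  show ?thesis
  proof (cases "pval p x \<le> pval p y")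
    case True
    hence "- real_of_int (pval p (x+y)) \<le> - real_of_int (pval p x)" using v by simp
    hence "pabs p (x+y) \<le> pabs p x" using False p p1 by (simp add: pabs_nz powr_mono)
    thus ?thesis by simp
  next
    case f: False
    hence "- real_of_int (pval p (x+y)) \<le> - real_of_int (pval p y)" using v by simp
    hence "pabs p (x+y) \<le> pabs p y" using False p p1 by (simp add: pabs_nz powr_mono)
    thus ?thesis by simp
  qed
qed

lemma pabs_triangle: "prime p \<Longrightarrow> pabs p (x + y) \<le> pabs p x + pabs p y"
  using pabs_ultra[of p x y] pabs_nonneg[of p] by (smt (verit))

lemma pabs_ultra_diff: "prime p \<Longrightarrow> pabs p (x - y) \<le> max (pabs p x) (pabs p y)"
  using pabs_ultra[of p x "-y"] pabs_uminus[of p y] by simp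

lemma pabs_triangle_diff: "prime p \<Longrightarrow> pabs p (x - y) \<le> pabs p x + pabs p y"
  using pabs_ultra_diff[of p x y] pabs_nonneg[of p] by (smt (verit))

lemma pabs_rev: assumes p: "prime p" shows "\<bar>pabs p x - pabs p y\<bar> \<le> pabs p (x - y)"
proof -
  have "pabs p x \<le> pabs p (x - y) + pabs p y" using pabs_triangle[OF p, of "x-y" y] by simp
  moreover have "pabs p y \<le> pabs p (y - x) + pabs p x" using pabs_triangle[OF p, of "y-x" x] by simp
  ultimately show ?thesis using pabs_minus_commute[OF p, of x y] by linarith
qed

lemma pabs_1[simp]: assumes p: "prime p" shows "pabs p 1 = 1"
  using pabs_nz[OF p, of 1] pval_int[OF p, of 1] prime_gt_0_nat[OF p] by simp

lemma pabs_inverse: assumes p: "prime p" shows "pabs p (inverse x) = inverse (pabs p x)"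
proof (cases "x = 0")
  case False
  have "pabs p (inverse x) * pabs p x = 1" using pabs_mult[OF p, of "inverse x" x] False p by simp
  moreover have "pabs p x \<noteq> 0" using False p by simp
  ultimately show ?thesis by (simp add: field_simps)
qed simp

lemma pabs_divide: "prime p \<Longrightarrow> pabs p (x / y) = pabs p x / pabs p y"
  by (simp add: divide_inverse pabs_mult pabs_inverse)

lemma pval_ge_bound:
  assumes p: "prime p" and r: "r \<noteq> 0" and k: "pval p r \<ge> int k"
  shows "pabs p r \<le> (1/2) ^ k"
proof -
  have p2: "real p \<ge> 2" using prime_ge_2_nat[OF p] by simp
  have "pabs p r \<le> real p powr (- real k)"
    using k p2 by (simp add: pabs_nz[OF p r] powr_mono)
  also have "\<dots> = inverse (real p ^ k)" using p2 by (simp add: powr_minus powr_realpow)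
  also have "\<dots> \<le> inverse (2 ^ k)" using p2 by (simp add: le_imp_inverse_le power_mono)
  also have "\<dots> = (1/2)^k" by (simp add: power_divide inverse_eq_divide)
  finally show ?thesis .
qed

lemma pabs_int_le1: assumes p: "prime p" shows "pabs p (of_int z) \<le> 1"
proof (cases "z = 0")
  case False
  have "pabs p (of_int z) \<le> (1/2)^0" by (rule pval_ge_bound[OF p]) (use False pval_int[OF p False] in auto)
  thus ?thesis by simp
qed simp

lemma pabs_nat_le1: "prime p \<Longrightarrow> pabs p (of_nat n) \<le> 1"
  using pabs_int_le1[of p "int n"] by simp

lemma pabs_int_dvd:
  assumes p: "prime p" and d: "int p ^ k dvd z"
  shows "pabs p (of_int z) \<le> (1/2) ^ k"
proof (cases "z = 0")
  case False
  have nu: "\<not> is_unit (int p)" using p prime_gt_1_nat by fastforce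
  have "multiplicity (int p) z \<ge> k" using multiplicity_geI[OF False nu d] .
  thus ?thesis using pval_ge_bound[OF p] pval_int[OF p False] False by simp
qed simp

lemma pabs_int_unit:
  assumes p: "prime p" and d: "\<not> int p dvd z"
  shows "pabs p (of_int z) = 1"
proof -
  have z: "z \<noteq> 0" using d by auto
  have "multiplicity (int p) z = 0" using d not_dvd_imp_multiplicity_0 by blast
  thus ?thesis using pval_int[OF p z] z p by (simp add: pabs_nz)
qed

lemma pabs_prime_pow_other:
  assumes l: "prime l" and p: "prime p" and ne: "l \<noteq> p"
  shows "pabs l (of_nat p ^ j) = 1"
proof -
  have "\<not> int l dvd int p ^ j"
  proof
    assume "int l dvd int p ^ j"
    hence "l dvd p ^ j" by (metis of_nat_dvd_iff of_nat_power)
    hence "l dvd p" using prime_dvd_power l by blast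
    thus False using l p ne primes_dvd_imp_eq by blast
  qed
  thus ?thesis using pabs_int_unit[OF l, of "int p ^ j"] by simp
qed

lemma pabs_power: "prime p \<Longrightarrow> pabs p (x ^ n) = pabs p x ^ n"
  by (induction n) (auto simp: pabs_mult)

lemma pabs_prime_pow_self: assumes p: "prime p" shows "pabs p (of_nat p ^ k) \<le> (1/2) ^ k"
  using pabs_int_dvd[OF p, of k "int p ^ k"] by simp

lemma pabs_of_nat_prime_pos: "prime p \<Longrightarrow> pabs p (of_nat p ^ k) > 0"
  using pabs_pos[of p "of_nat p ^ k"] prime_gt_0_nat by simp


lemma half_pow_small: "(e::real) > 0 \<Longrightarrow> \<exists>k. (1/2::real)^k < e"
  using real_arch_pow_inv[of e "1/2"] by auto

lemma exK:
  assumes "finite A" "\<forall>x\<in>A. (e x :: real) > 0"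
  shows "\<exists>K. \<forall>x\<in>A. (1/2::real)^K < e x"
  using assms
proof (induction A rule: finite_induct)
  case empty then show ?case by simp
next
  case (insert a A)
  then obtain K1 where K1: "\<forall>x\<in>A. (1/2::real)^K1 < e x" by auto
  obtain K2 where K2: "(1/2::real)^K2 < e a" using half_pow_small[of "e a"] insert.prems by auto
  have mono: "(1/2::real)^(max K1 K2) \<le> (1/2)^K1" "(1/2::real)^(max K1 K2) \<le> (1/2)^K2"
    by (simp_all add: power_decreasing)
  show ?case
  proof (intro exI[of _ "max K1 K2"] ballI)
    fix x assume "x \<in> insert a A"
    thus "(1/2::real)^(max K1 K2) < e x"
    proof
      assume "x = a" thus ?thesis using le_less_trans[OF mono(2) K2] by simp
    next
      assume "x \<in> A" thus ?thesis using le_less_trans[OF mono(1) K1[rule_format, of x]] by simp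
    qed
  qed
qed

lemma frac_nz: "(a::int) \<noteq> 0 \<Longrightarrow> b \<noteq> 0 \<Longrightarrow> (of_int a / of_int b :: rat) \<noteq> 0"
  by simp

lemma one_prime_approx:
  assumes p: "prime p" and e: "e > 0"
  shows "\<exists>s::rat. pabs p (s - \<beta>) < e \<and> (\<forall>l. prime l \<and> l \<noteq> p \<longrightarrow> pabs l s \<le> 1)"
proof -
  obtain u w :: int where w: "w > 0" and b: "\<beta> = of_int u / of_int w" by (rule rat_as_frac)
  define j where "j = multiplicity (int p) w"
  obtain w' where w': "w = int p ^ j * w'" "\<not> int p dvd w'"
  proof -
    have nu: "\<not> is_unit (int p)" using p prime_gt_1_nat by fastforce
    have "w \<noteq> 0" using w by simp
    thus ?thesis using multiplicity_decompose'[of w "int p"] nu that unfolding j_def by blast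
  qed
  obtain k where k: "(1/2::real)^k < e" using half_pow_small e by blast
  have pe: "prime (int p)" using p by simp
  have "coprime (int p) w'" using prime_imp_coprime[OF pe w'(2)] .
  hence cop: "coprime (int p ^ (k+j)) w'" by simp
  obtain x y where xy: "x * int p ^ (k+j) + y * w' = 1"
    using bezout_int[of "int p ^ (k+j)" w'] cop by (auto simp: coprime_iff_gcd_eq_1)
  define n where "n = y * u"
  have dz: "int p ^ (k+j) dvd (n * w' - u)"
  proof -
    have "n * w' - u = u * (y * w' - 1)" unfolding n_def by (simp add: algebra_simps)
    also have "y * w' - 1 = - x * int p ^ (k+j)" using xy by linarith
    hence "u * (y * w' - 1) = u * (- x * int p ^ (k+j))" by simp
    finally show ?thesis by simp
  qed
  define s :: rat where "s = of_int n / of_nat p ^ j"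
  have w'nz: "w' \<noteq> 0" using w w' by auto
  have pnz: "(of_nat p :: rat) \<noteq> 0" using p prime_gt_0_nat by simp
  have sb: "s - \<beta> = of_int (n * w' - u) / of_int (int p ^ j * w')"
    unfolding s_def b using w' w'nz pnz by (simp add: field_simps)
  have close: "pabs p (s - \<beta>) \<le> (1/2)^k"
  proof (cases "n * w' - u = 0")
    case True then show ?thesis using sb by simp
  next
    case False
    have nu: "\<not> is_unit (int p)" using p prime_gt_1_nat by fastforce
    have m1: "multiplicity (int p) (n * w' - u) \<ge> k + j" using multiplicity_geI[OF False nu dz] .
    have m2: "multiplicity (int p) (int p ^ j * w') = j"
      using prime_elem_multiplicity_mult_distrib[of "int p" "int p ^ j" w'] pe w'nz
        not_dvd_imp_multiplicity_0[OF w'(2)] p prime_gt_0_nat by simp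
    have "pval p (s - \<beta>) \<ge> int k"
      using pval_frac[OF p False, of "int p ^ j * w'"] sb m1 m2 w'nz p prime_gt_0_nat by simp
    moreover have "s - \<beta> \<noteq> 0" unfolding sb
      by (rule frac_nz) (use False w'nz p prime_gt_0_nat in simp_all)
    ultimately show ?thesis using pval_ge_bound[OF p] by blast
  qed
  have other: "pabs l s \<le> 1" if l: "prime l" "l \<noteq> p" for l
  proof -
    have "pabs l s = pabs l (of_int n) / pabs l (of_nat p ^ j)"
      unfolding s_def using pabs_divide[OF l(1)] by simp
    also have "\<dots> = pabs l (of_int n)" using pabs_prime_pow_other[OF l(1) p l(2)] by simp
    also have "\<dots> \<le> 1" using pabs_int_le1[OF l(1)] .
    finally show ?thesis .
  qed
  show ?thesis using close k other by (intro exI[of _ s]) fastforce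
qed

lemma prod_int_dvd:
  assumes "finite A" "l \<in> A"
  shows "int l ^ K dvd (\<Prod>x\<in>A. int x ^ K)"
  using dvd_prodI[OF assms, of "\<lambda>x. int x ^ K"] .

lemma approx_core:
  assumes "finite P" "\<forall>p\<in>P. prime p" "\<forall>p\<in>P. (e p :: real) > 0"
  shows "\<exists>q::rat. (\<forall>p\<in>P. pabs p (q - \<beta> p) < e p) \<and> (\<forall>l. prime l \<and> l \<notin> P \<longrightarrow> pabs l q \<le> 1)"
  using assms
proof (induction P rule: finite_induct)
  case empty
  show ?case by (intro exI[of _ 1]) simp
next
  case (insert p P)
  then obtain q0 where q0: "\<forall>x\<in>P. pabs x (q0 - \<beta> x) < e x" "\<forall>l. prime l \<and> l \<notin> P \<longrightarrow> pabs l q0 \<le> 1"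
    by auto
  have p: "prime p" and ep: "e p > 0" using insert by auto
  obtain K where K: "\<forall>x\<in>P. (1/2::real)^K < e x" using exK[of P e] insert.hyps(1) insert.prems by auto
  define M :: int where "M = (\<Prod>x\<in>P. int x ^ K)"
  have Mnz: "M \<noteq> 0" unfolding M_def using insert prime_gt_0_nat by (auto simp: prod_zero_iff)
  obtain s where s: "pabs p (s - (\<beta> p - q0) / of_int M) < e p"
    "\<forall>l. prime l \<and> l \<noteq> p \<longrightarrow> pabs l s \<le> 1"
    using one_prime_approx[OF p ep] by blast
  define q where "q = q0 + of_int M * s"
  have at_p: "pabs p (q - \<beta> p) < e p"
  proof -
    have "q - \<beta> p = of_int M * (s - (\<beta> p - q0) / of_int M)"
      unfolding q_def using Mnz by (simp add: field_simps)
    hence "pabs p (q - \<beta> p) = pabs p (of_int M) * pabs p (s - (\<beta> p - q0) / of_int M)"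
      using pabs_mult[OF p] by simp
    also have "\<dots> \<le> pabs p (s - (\<beta> p - q0) / of_int M)"
      using pabs_int_le1[OF p, of M] pabs_nonneg[of p] by (simp add: mult_left_le_one_le)
    finally show ?thesis using s(1) by simp
  qed
  have at_P: "pabs x (q - \<beta> x) < e x" if x: "x \<in> P" for x
  proof -
    have xp: "prime x" "x \<noteq> p" using x insert by auto
    have "pabs x (of_int M * s) = pabs x (of_int M) * pabs x s" using pabs_mult[OF xp(1)] by simp
    also have "\<dots> \<le> pabs x (of_int M)"
      using s(2) xp pabs_nonneg[of x] by (simp add: mult_left_le)
    also have "\<dots> \<le> (1/2)^K" using pabs_int_dvd[OF xp(1) prod_int_dvd[OF insert(1) x]] M_def by simp
    finally have "pabs x (of_int M * s) < e x" using K x by fastforce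
    moreover have eq: "q - \<beta> x = (q0 - \<beta> x) + of_int M * s" unfolding q_def by simp
    have "pabs x (q - \<beta> x) \<le> max (pabs x (q0 - \<beta> x)) (pabs x (of_int M * s))"
      unfolding eq by (rule pabs_ultra[OF xp(1)])
    moreover have "pabs x (q0 - \<beta> x) < e x" using q0(1) x by blast
    ultimately show ?thesis by simp
  qed
  have outside: "pabs l q \<le> 1" if l: "prime l" "l \<notin> insert p P" for l
  proof -
    have "pabs l (of_int M * s) \<le> 1"
      using pabs_mult[OF l(1)] pabs_int_le1[OF l(1), of M] s(2) l pabs_nonneg[of l]
      by (simp add: mult_le_one)
    moreover have "pabs l q0 \<le> 1" using q0(2)[rule_format, of l] l by simp
    ultimately show ?thesis unfolding q_def using pabs_ultra[OF l(1), of q0 "of_int M * s"] by simp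
  qed
  show ?case using at_p at_P outside by (intro exI[of _ q]) auto
qed

lemma approx:
  assumes "finite P" "\<forall>p\<in>P. prime p" "\<forall>p\<in>P. (e p :: real) > 0"
  shows "\<exists>q::rat. q > 0 \<and> (\<forall>p\<in>P. pabs p (q - \<beta> p) < e p) \<and> (\<forall>l. prime l \<and> l \<notin> P \<longrightarrow> pabs l q \<le> 1)"
proof -
  obtain q0 where q0: "\<forall>p\<in>P. pabs p (q0 - \<beta> p) < e p" "\<forall>l. prime l \<and> l \<notin> P \<longrightarrow> pabs l q0 \<le> 1"
    using approx_core[OF assms] by blast
  obtain K where K: "\<forall>x\<in>P. (1/2::real)^K < e x" using exK[of P e] assms by auto
  define M :: int where "M = (\<Prod>x\<in>P. int x ^ K)"
  have ge1: "1 \<le> int x" if "x \<in> P" for x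
  proof -
    have "prime x" using assms(2) that by blast
    thus ?thesis using prime_gt_0_nat[of x] by simp
  qed
  have Mpos: "M \<ge> 1" unfolding M_def using ge1 by (intro prod_ge_1) simp
  define N :: int where "N = \<lceil>\<bar>q0\<bar>\<rceil> + 1"
  have Npos: "N \<ge> 1" unfolding N_def by simp
  define q where "q = q0 + of_int (N * M)"
  have "N * M \<ge> N * 1" using mult_left_mono[OF Mpos, of N] Npos by simp
  hence "of_int (N * M) \<ge> (of_int N :: rat)" by (simp only: of_int_le_iff mult_1_right)
  moreover have "(of_int N :: rat) > \<bar>q0\<bar>" unfolding N_def by linarith
  ultimately have qpos: "q > 0" unfolding q_def by linarith
  have at_P: "pabs x (q - \<beta> x) < e x" if x: "x \<in> P" for x
  proof -
    have xp: "prime x" using x assms by auto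
    have "int x ^ K dvd N * M" using prod_int_dvd[OF assms(1) x] M_def by simp
    hence "pabs x (of_int (N * M)) \<le> (1/2)^K" using pabs_int_dvd[OF xp] by blast
    hence "pabs x (of_int (N * M)) < e x" using K x by fastforce
    moreover have eq: "q - \<beta> x = (q0 - \<beta> x) + of_int (N * M)" unfolding q_def by simp
    have "pabs x (q - \<beta> x) \<le> max (pabs x (q0 - \<beta> x)) (pabs x (of_int (N * M)))"
      unfolding eq by (rule pabs_ultra[OF xp])
    moreover have "pabs x (q0 - \<beta> x) < e x" using q0(1) x by blast
    ultimately show ?thesis by simp
  qed
  have outside: "pabs l q \<le> 1" if l: "prime l" "l \<notin> P" for l
  proof -
    have "pabs l q0 \<le> 1" using q0(2)[rule_format, of l] l by simp
    thus ?thesis unfolding q_def using pabs_ultra[OF l(1), of q0 "of_int (N*M)"] pabs_int_le1[OF l(1), of "N*M"]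
      by simp
  qed
  show ?thesis using qpos at_P outside by blast
qed


context fixes p :: nat assumes p: "prime p"
begin

lemma pabs_abs: "\<bar>pabs p x\<bar> = pabs p x" using pabs_nonneg[of p x] by simp

lemma null_cmp:
  assumes "\<And>n. pabs p (u n) \<le> g n" "g \<longlonglongrightarrow> 0"
  shows "(\<lambda>n. pabs p (u n)) \<longlonglongrightarrow> 0"
  by (rule Lim_null_comparison[of _ g]) (use assms pabs_abs in auto)

lemma cauchy_const: "p_cauchy p (\<lambda>n. c)"
  unfolding p_cauchy_def by simp

lemma cauchy_abs_Cauchy: assumes "p_cauchy p s" shows "Cauchy (\<lambda>n. pabs p (s n))"
proof (rule CauchyI)
  fix e :: real assume "e > 0"
  then obtain N where N: "\<forall>m\<ge>N. \<forall>n\<ge>N. pabs p (s m - s n) < e" using assms unfolding p_cauchy_def by blast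
  show "\<exists>M. \<forall>m\<ge>M. \<forall>n\<ge>M. norm (pabs p (s m) - pabs p (s n)) < e"
  proof (intro exI[of _ N] allI impI)
    fix m n assume "m \<ge> N" "n \<ge> N"
    hence "pabs p (s m - s n) < e" using N by blast
    thus "norm (pabs p (s m) - pabs p (s n)) < e" using pabs_rev[OF p, of "s m" "s n"] by simp
  qed
qed

lemma cauchy_abs_conv: "p_cauchy p s \<Longrightarrow> (\<lambda>n. pabs p (s n)) \<longlonglongrightarrow> lim (\<lambda>n. pabs p (s n))"
  using cauchy_abs_Cauchy Cauchy_convergent_iff convergent_LIMSEQ_iff by blast

lemma cauchy_bounded: assumes "p_cauchy p s" obtains B where "B > 0" "\<And>n. pabs p (s n) \<le> B"
proof -
  have "Bseq (\<lambda>n. pabs p (s n))"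
    using cauchy_abs_Cauchy[OF assms] Cauchy_convergent_iff convergent_imp_Bseq by blast
  then obtain K where "K > 0" "\<forall>n. norm (pabs p (s n)) \<le> K" by (rule BseqE)
  thus ?thesis using that pabs_abs by auto
qed

lemma cauchy_add: assumes s: "p_cauchy p s" and t: "p_cauchy p t" shows "p_cauchy p (\<lambda>n. s n + t n)"
  unfolding p_cauchy_def
proof (intro allI impI)
  fix e :: real assume e: "e > 0"
  obtain N1 where N1: "\<forall>m\<ge>N1. \<forall>n\<ge>N1. pabs p (s m - s n) < e" using s e unfolding p_cauchy_def by blast
  obtain N2 where N2: "\<forall>m\<ge>N2. \<forall>n\<ge>N2. pabs p (t m - t n) < e" using t e unfolding p_cauchy_def by blast
  show "\<exists>N. \<forall>m\<ge>N. \<forall>n\<ge>N. pabs p (s m + t m - (s n + t n)) < e"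
  proof (intro exI[of _ "max N1 N2"] allI impI)
    fix m n assume "m \<ge> max N1 N2" "n \<ge> max N1 N2"
    hence "pabs p (s m - s n) < e" "pabs p (t m - t n) < e" using N1 N2 by auto
    hence mx: "max (pabs p (s m - s n)) (pabs p (t m - t n)) < e" by simp
    have eq: "s m + t m - (s n + t n) = (s m - s n) + (t m - t n)" by simp
    show "pabs p (s m + t m - (s n + t n)) < e"
      unfolding eq by (rule le_less_trans[OF pabs_ultra[OF p] mx])
  qed
qed

lemma cauchy_uminus: assumes s: "p_cauchy p s" shows "p_cauchy p (\<lambda>n. - s n)"
  unfolding p_cauchy_def
proof (intro allI impI)
  fix e :: real assume "e > 0"
  then obtain N where N: "\<forall>m\<ge>N. \<forall>n\<ge>N. pabs p (s m - s n) < e" using s unfolding p_cauchy_def by blast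
  have "pabs p (- s m - - s n) = pabs p (s m - s n)" for m n
    using pabs_uminus[OF p, of "s m - s n"] by simp
  thus "\<exists>N. \<forall>m\<ge>N. \<forall>n\<ge>N. pabs p (- s m - - s n) < e" using N by auto
qed

lemma cauchy_diff: "p_cauchy p s \<Longrightarrow> p_cauchy p t \<Longrightarrow> p_cauchy p (\<lambda>n. s n - t n)"
  using cauchy_add[of s "\<lambda>n. - t n"] cauchy_uminus[of t] by simp

lemma cauchy_mult: assumes s: "p_cauchy p s" and t: "p_cauchy p t" shows "p_cauchy p (\<lambda>n. s n * t n)"
  unfolding p_cauchy_def
proof (intro allI impI)
  fix e :: real assume e: "e > 0"
  obtain Bs where Bs: "Bs > 0" "\<And>n. pabs p (s n) \<le> Bs" using cauchy_bounded[OF s] by blast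
  obtain Bt where Bt: "Bt > 0" "\<And>n. pabs p (t n) \<le> Bt" using cauchy_bounded[OF t] by blast
  have e1: "e / (4 * Bs) > 0" "e / (4 * Bt) > 0" using e Bs Bt by auto
  obtain N1 where N1: "\<forall>m\<ge>N1. \<forall>n\<ge>N1. pabs p (t m - t n) < e / (4 * Bs)" using t e1 unfolding p_cauchy_def by blast
  obtain N2 where N2: "\<forall>m\<ge>N2. \<forall>n\<ge>N2. pabs p (s m - s n) < e / (4 * Bt)" using s e1 unfolding p_cauchy_def by blast
  show "\<exists>N. \<forall>m\<ge>N. \<forall>n\<ge>N. pabs p (s m * t m - s n * t n) < e"
  proof (intro exI[of _ "max N1 N2"] allI impI)
    fix m n assume "m \<ge> max N1 N2" "n \<ge> max N1 N2"
    hence a: "pabs p (t m - t n) < e / (4 * Bs)" and b: "pabs p (s m - s n) < e / (4 * Bt)" using N1 N2 by auto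
    have eq: "s m * t m - s n * t n = s m * (t m - t n) + (s m - s n) * t n" by (simp add: algebra_simps)
    have "pabs p (s m) * pabs p (t m - t n) \<le> Bs * (e / (4 * Bs))"
      by (rule mult_mono) (use a Bs pabs_nonneg[of p] in auto)
    also have "\<dots> = e / 4" using Bs by simp
    finally have c: "pabs p (s m * (t m - t n)) \<le> e / 4" using pabs_mult[OF p] by simp
    have "pabs p (s m - s n) * pabs p (t n) \<le> (e / (4 * Bt)) * Bt"
      by (rule mult_mono) (use b Bt e pabs_nonneg[of p] in auto)
    also have "\<dots> = e / 4" using Bt by simp
    finally have d: "pabs p ((s m - s n) * t n) \<le> e / 4" using pabs_mult[OF p] by simp
    show "pabs p (s m * t m - s n * t n) < e"
      unfolding eq using pabs_triangle[OF p, of "s m * (t m - t n)" "(s m - s n) * t n"] c d e by simp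
  qed
qed

lemma equiv_refl: "p_equiv p s s"
  unfolding p_equiv_def by simp

lemma equiv_sym: "p_equiv p s t \<Longrightarrow> p_equiv p t s"
  unfolding p_equiv_def using pabs_minus_commute[OF p] by simp

lemma equiv_trans: assumes "p_equiv p s t" "p_equiv p t u" shows "p_equiv p s u"
  unfolding p_equiv_def
proof (rule null_cmp)
  show "pabs p (s n - u n) \<le> pabs p (s n - t n) + pabs p (t n - u n)" for n
    using pabs_triangle[OF p, of "s n - t n" "t n - u n"] by simp
  show "(\<lambda>n. pabs p (s n - t n) + pabs p (t n - u n)) \<longlonglongrightarrow> 0"
    using tendsto_add[OF assms[unfolded p_equiv_def]] by simp
qed

lemma equiv_add: assumes "p_equiv p s s'" "p_equiv p t t'"
  shows "p_equiv p (\<lambda>n. s n + t n) (\<lambda>n. s' n + t' n)"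
  unfolding p_equiv_def
proof (rule null_cmp)
  show "pabs p (s n + t n - (s' n + t' n)) \<le> pabs p (s n - s' n) + pabs p (t n - t' n)" for n
    using pabs_triangle[OF p, of "s n - s' n" "t n - t' n"] by (simp add: algebra_simps)
  show "(\<lambda>n. pabs p (s n - s' n) + pabs p (t n - t' n)) \<longlonglongrightarrow> 0"
    using tendsto_add[OF assms[unfolded p_equiv_def]] by simp
qed

lemma equiv_mult: assumes "p_equiv p s s'" "p_equiv p t t'" "p_cauchy p s" "p_cauchy p t'"
  shows "p_equiv p (\<lambda>n. s n * t n) (\<lambda>n. s' n * t' n)"
  unfolding p_equiv_def
proof -
  obtain Bs where Bs: "Bs > 0" "\<And>n. pabs p (s n) \<le> Bs" using cauchy_bounded[OF assms(3)] by blast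
  obtain Bt where Bt: "Bt > 0" "\<And>n. pabs p (t' n) \<le> Bt" using cauchy_bounded[OF assms(4)] by blast
  show "(\<lambda>n. pabs p (s n * t n - s' n * t' n)) \<longlonglongrightarrow> 0"
  proof (rule null_cmp)
    fix n
    have eq: "s n * t n - s' n * t' n = s n * (t n - t' n) + (s n - s' n) * t' n" by (simp add: algebra_simps)
    have "pabs p (s n * (t n - t' n)) \<le> Bs * pabs p (t n - t' n)"
      using Bs(2)[of n] pabs_mult[OF p] pabs_nonneg[of p] by (simp add: mult_right_mono)
    moreover have "pabs p (t' n) * pabs p (s n - s' n) \<le> Bt * pabs p (s n - s' n)"
      by (rule mult_right_mono) (use Bt pabs_nonneg[of p] in auto)
    hence "pabs p ((s n - s' n) * t' n) \<le> Bt * pabs p (s n - s' n)"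
      using pabs_mult[OF p] by (simp add: mult.commute)
    ultimately show "pabs p (s n * t n - s' n * t' n) \<le> Bs * pabs p (t n - t' n) + Bt * pabs p (s n - s' n)"
      unfolding eq using pabs_triangle[OF p, of "s n * (t n - t' n)" "(s n - s' n) * t' n"] by simp
  next
    show "(\<lambda>n. Bs * pabs p (t n - t' n) + Bt * pabs p (s n - s' n)) \<longlonglongrightarrow> 0"
      using tendsto_add[OF tendsto_mult_right_zero[OF assms(2)[unfolded p_equiv_def]]
          tendsto_mult_right_zero[OF assms(1)[unfolded p_equiv_def]]] by simp
  qed
qed

lemma in_pclass: "p_cauchy p s \<Longrightarrow> s \<in> pclass p s"
  unfolding pclass_def using equiv_refl by simp

lemma pclass_eq_iff: assumes "p_cauchy p s" "p_cauchy p t"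
  shows "pclass p s = pclass p t \<longleftrightarrow> p_equiv p s t"
proof
  assume "pclass p s = pclass p t"
  hence "t \<in> pclass p s" using in_pclass[OF assms(2)] by simp
  thus "p_equiv p s t" unfolding pclass_def by simp
next
  assume e: "p_equiv p s t"
  show "pclass p s = pclass p t"
    unfolding pclass_def using e equiv_trans equiv_sym by blast
qed

lemma pclass_eqI: "p_cauchy p s \<Longrightarrow> p_cauchy p t \<Longrightarrow> p_equiv p s t \<Longrightarrow> pclass p s = pclass p t"
  using pclass_eq_iff by blast

lemma prep_class: assumes "p_cauchy p s"
  shows "p_cauchy p (prep (pclass p s))" "p_equiv p s (prep (pclass p s))"
proof -
  have "prep (pclass p s) \<in> pclass p s" unfolding prep_def
    by (rule someI[where P="\<lambda>x. x \<in> pclass p s"]) (rule in_pclass[OF assms])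
  thus "p_cauchy p (prep (pclass p s))" "p_equiv p s (prep (pclass p s))" unfolding pclass_def by auto
qed

lemma Qp_rep: assumes "X \<in> Qp p" shows "p_cauchy p (prep X)" "X = pclass p (prep X)"
proof -
  obtain s where s: "p_cauchy p s" "X = pclass p s" using assms unfolding Qp_def by blast
  show "p_cauchy p (prep X)" using prep_class(1)[OF s(1)] s(2) by simp
  have "pclass p s = pclass p (prep (pclass p s))"
    by (rule pclass_eqI[OF s(1) prep_class(1)[OF s(1)] prep_class(2)[OF s(1)]])
  thus "X = pclass p (prep X)" using s(2) by simp
qed

lemma Qp_cases: assumes "X \<in> Qp p" obtains s where "p_cauchy p s" "X = pclass p s"
  using Qp_rep[OF assms] by blast

lemma pclass_in_Qp: "p_cauchy p s \<Longrightarrow> pclass p s \<in> Qp p"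
  unfolding Qp_def by blast

lemma padd_class: assumes "p_cauchy p s" "p_cauchy p t"
  shows "padd p (pclass p s) (pclass p t) = pclass p (\<lambda>n. s n + t n)"
  unfolding padd_def
proof (rule pclass_eqI)
  show "p_cauchy p (\<lambda>n. prep (pclass p s) n + prep (pclass p t) n)"
    using assms prep_class(1) cauchy_add by blast
  show "p_cauchy p (\<lambda>n. s n + t n)" using assms cauchy_add by blast
  show "p_equiv p (\<lambda>n. prep (pclass p s) n + prep (pclass p t) n) (\<lambda>n. s n + t n)"
    by (rule equiv_add; rule equiv_sym; rule prep_class(2)) (use assms in blast)+
qed

lemma pmul_class: assumes "p_cauchy p s" "p_cauchy p t"
  shows "pmul p (pclass p s) (pclass p t) = pclass p (\<lambda>n. s n * t n)"
  unfolding pmul_def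
proof (rule pclass_eqI)
  show "p_cauchy p (\<lambda>n. prep (pclass p s) n * prep (pclass p t) n)"
    using assms prep_class cauchy_mult by auto
  show "p_cauchy p (\<lambda>n. s n * t n)" using assms cauchy_mult by auto
  show "p_equiv p (\<lambda>n. prep (pclass p s) n * prep (pclass p t) n) (\<lambda>n. s n * t n)"
  proof (rule equiv_mult)
    show "p_equiv p (prep (pclass p s)) s" by (rule equiv_sym, rule prep_class(2)) (use assms in blast)
    show "p_equiv p (prep (pclass p t)) t" by (rule equiv_sym, rule prep_class(2)) (use assms in blast)
    show "p_cauchy p (prep (pclass p s))" using prep_class(1) assms by blast
    show "p_cauchy p t" using assms by blast
  qed
qed

lemma pnorm_class: assumes s: "p_cauchy p s"
  shows "(\<lambda>n. pabs p (s n)) \<longlonglongrightarrow> pnorm p (pclass p s)"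
proof -
  let ?t = "prep (pclass p s)"
  have t: "p_cauchy p ?t" "p_equiv p s ?t" using prep_class[OF s] by auto
  have lt: "(\<lambda>n. pabs p (?t n)) \<longlonglongrightarrow> pnorm p (pclass p s)"
    unfolding pnorm_def using cauchy_abs_conv[OF t(1)] .
  have d: "(\<lambda>n. pabs p (s n) - pabs p (?t n)) \<longlonglongrightarrow> 0"
  proof (rule Lim_null_comparison[of _ "\<lambda>n. pabs p (s n - ?t n)"])
    show "\<forall>\<^sub>F n in sequentially. norm (pabs p (s n) - pabs p (?t n)) \<le> pabs p (s n - ?t n)"
      using pabs_rev[OF p] by simp
    show "(\<lambda>n. pabs p (s n - ?t n)) \<longlonglongrightarrow> 0" using t(2) unfolding p_equiv_def .
  qed
  show ?thesis using tendsto_add[OF lt d] by simp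
qed

lemma pnorm_nonneg: assumes "X \<in> Qp p" shows "pnorm p X \<ge> 0"
proof -
  obtain s where s: "p_cauchy p s" "X = pclass p s" using Qp_cases[OF assms] by blast
  show ?thesis using LIMSEQ_le_const[OF pnorm_class[OF s(1)]] pabs_nonneg[of p] s by auto
qed

lemma pzero_iff: assumes s: "p_cauchy p s"
  shows "pclass p s = pzero p \<longleftrightarrow> (\<lambda>n. pabs p (s n)) \<longlonglongrightarrow> 0"
proof -
  have "pclass p s = pzero p \<longleftrightarrow> p_equiv p s (\<lambda>n. 0)"
    unfolding pzero_def using pclass_eq_iff[OF s cauchy_const] by simp
  thus ?thesis unfolding p_equiv_def by simp
qed

lemma pzero_iff_norm: assumes s: "p_cauchy p s"
  shows "pclass p s = pzero p \<longleftrightarrow> pnorm p (pclass p s) = 0"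
proof
  assume "pclass p s = pzero p" hence "(\<lambda>n. pabs p (s n)) \<longlonglongrightarrow> 0" using pzero_iff[OF s] by simp
  thus "pnorm p (pclass p s) = 0" using pnorm_class[OF s] LIMSEQ_unique by blast
next
  assume "pnorm p (pclass p s) = 0" thus "pclass p s = pzero p" using pnorm_class[OF s] pzero_iff[OF s] by simp
qed

lemma pzero_in: "pzero p \<in> Qp p"
  unfolding pzero_def using pclass_in_Qp cauchy_const by blast

lemma pconst_in: "pconst p r \<in> Qp p"
  unfolding pconst_def using pclass_in_Qp cauchy_const by blast

lemma pnorm_const: "pnorm p (pconst p r) = pabs p r"
  unfolding pconst_def using pnorm_class[OF cauchy_const, of r] LIMSEQ_unique by auto

lemma pnorm_zero: "pnorm p (pzero p) = 0"
  using pnorm_const[of 0] unfolding pconst_def pzero_def by simp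

lemma pabs_ultra_eq: assumes "pabs p y < pabs p x" shows "pabs p (x + y) = pabs p x"
proof -
  have a: "pabs p (x + y) \<le> pabs p x" using pabs_ultra[OF p, of x y] assms by simp
  have "pabs p x \<le> max (pabs p (x + y)) (pabs p y)" using pabs_ultra_diff[OF p, of "x + y" y] by simp
  thus ?thesis using a assms by (auto simp: max_def split: if_splits)
qed

lemma eventually_const_abs:
  assumes s: "p_cauchy p s" and nz: "\<not> (\<lambda>n. pabs p (s n)) \<longlonglongrightarrow> 0"
  shows "\<exists>N. \<forall>n\<ge>N. pabs p (s n) = pnorm p (pclass p s)"
proof -
  let ?L = "pnorm p (pclass p s)"
  have L: "(\<lambda>n. pabs p (s n)) \<longlonglongrightarrow> ?L" using pnorm_class[OF s] .
  have "?L \<noteq> 0" using L nz by auto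
  moreover have "?L \<ge> 0" using LIMSEQ_le_const[OF L] pabs_nonneg[of p] by auto
  ultimately have Lpos: "?L > 0" by simp
  obtain N1 where N1: "\<forall>m\<ge>N1. \<forall>n\<ge>N1. pabs p (s m - s n) < ?L / 2"
  proof -
    have "?L / 2 > 0" using Lpos by simp
    thus ?thesis using s that unfolding p_cauchy_def by blast
  qed
  have ev: "\<forall>\<^sub>F m in sequentially. pabs p (s m) > ?L / 2"
    using order_tendstoD(1)[OF L, of "?L/2"] Lpos by simp
  show ?thesis
  proof (intro exI[of _ N1] allI impI)
    fix n assume n: "n \<ge> N1"
    have "\<forall>\<^sub>F m in sequentially. pabs p (s m) = pabs p (s n)"
      using ev eventually_ge_at_top[of N1]
    proof eventually_elim
      case (elim m)
      hence "pabs p (- (s m - s n)) < pabs p (s m)" using N1 n pabs_uminus[OF p] by fastforce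
      hence "pabs p (s m + - (s m - s n)) = pabs p (s m)" by (rule pabs_ultra_eq)
      thus ?case by simp
    qed
    hence "(\<lambda>m. pabs p (s m)) \<longlonglongrightarrow> pabs p (s n)" by (rule tendsto_eventually)
    thus "pabs p (s n) = ?L" using L LIMSEQ_unique by blast
  qed
qed

end


definition pneg :: "nat \<Rightarrow> (nat \<Rightarrow> rat) set \<Rightarrow> (nat \<Rightarrow> rat) set" where
  "pneg p X = pclass p (\<lambda>n. - prep X n)"

context fixes p :: nat assumes p: "prime p"
begin

lemma lim_le_lim:
  assumes "(f::nat\<Rightarrow>real) \<longlonglongrightarrow> a" "g \<longlonglongrightarrow> b" "\<And>n. f n \<le> g n"
  shows "a \<le> b"
  using LIMSEQ_le[OF assms(1,2)] assms(3) by blast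

lemma pnorm_add_le: assumes "X \<in> Qp p" "Y \<in> Qp p"
  shows "pnorm p (padd p X Y) \<le> max (pnorm p X) (pnorm p Y)"
proof -
  obtain s where s: "p_cauchy p s" "X = pclass p s" using Qp_cases[OF p assms(1)] by blast
  obtain t where t: "p_cauchy p t" "Y = pclass p t" using Qp_cases[OF p assms(2)] by blast
  have e: "padd p (pclass p s) (pclass p t) = pclass p (\<lambda>n. s n + t n)" using padd_class[OF p s(1) t(1)] by simp
  show ?thesis unfolding s(2) t(2) e
    by (rule lim_le_lim[OF pnorm_class[OF p cauchy_add[OF p s(1) t(1)]]
          tendsto_max[OF pnorm_class[OF p s(1)] pnorm_class[OF p t(1)]]])
       (rule pabs_ultra[OF p])
qed

lemma padd_in: assumes "X \<in> Qp p" "Y \<in> Qp p" shows "padd p X Y \<in> Qp p"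
proof -
  obtain s where s: "p_cauchy p s" "X = pclass p s" using Qp_cases[OF p assms(1)] by blast
  obtain t where t: "p_cauchy p t" "Y = pclass p t" using Qp_cases[OF p assms(2)] by blast
  show ?thesis using padd_class[OF p s(1) t(1)] s t pclass_in_Qp[OF p cauchy_add[OF p s(1) t(1)]] by simp
qed

lemma padd_nonzero: assumes "X \<in> Qp p" "Y \<in> Qp p" "pnorm p Y < pnorm p X"
  shows "padd p X Y \<noteq> pzero p"
proof -
  obtain s where s: "p_cauchy p s" "X = pclass p s" using Qp_cases[OF p assms(1)] by blast
  obtain t where t: "p_cauchy p t" "Y = pclass p t" using Qp_cases[OF p assms(2)] by blast
  have e: "padd p (pclass p s) (pclass p t) = pclass p (\<lambda>n. s n + t n)" using padd_class[OF p s(1) t(1)] by simp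
  have st: "p_cauchy p (\<lambda>n. s n + t n)" using cauchy_add[OF p s(1) t(1)] .
  have "pnorm p X \<le> pnorm p (padd p X Y) + pnorm p Y"
    unfolding s(2) t(2) e
  proof (rule lim_le_lim[OF pnorm_class[OF p s(1)] tendsto_add[OF pnorm_class[OF p st] pnorm_class[OF p t(1)]]])
    fix n show "pabs p (s n) \<le> pabs p (s n + t n) + pabs p (t n)"
      using pabs_triangle_diff[OF p, of "s n + t n" "t n"] by simp
  qed
  hence "pnorm p (padd p X Y) \<noteq> 0" using assms(3) by simp
  thus ?thesis using pnorm_zero[OF p] by auto
qed

lemma padd_zero_right: assumes "X \<in> Qp p" shows "padd p X (pzero p) = X"
proof -
  obtain s where s: "p_cauchy p s" "X = pclass p s" using Qp_cases[OF p assms(1)] by blast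
  show ?thesis unfolding pzero_def s(2) using padd_class[OF p s(1) cauchy_const[OF p]] by simp
qed

lemma pneg_in: assumes "X \<in> Qp p" shows "pneg p X \<in> Qp p"
  unfolding pneg_def using pclass_in_Qp[OF p cauchy_uminus[OF p Qp_rep(1)[OF p assms]]] .

lemma padd_pneg: assumes "X \<in> Qp p" shows "padd p X (pneg p X) = pzero p"
proof -
  have c: "p_cauchy p (prep X)" "X = pclass p (prep X)" using Qp_rep[OF p assms] by auto
  have "padd p X (pneg p X) = pclass p (\<lambda>n. prep X n + - prep X n)"
    unfolding pneg_def using padd_class[OF p c(1) cauchy_uminus[OF p c(1)]] c(2) by simp
  thus ?thesis unfolding pzero_def by simp
qed

lemma pnorm_pneg: assumes "X \<in> Qp p" shows "pnorm p (pneg p X) = pnorm p X"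
proof -
  have c: "p_cauchy p (prep X)" "X = pclass p (prep X)" using Qp_rep[OF p assms] by auto
  have "(\<lambda>n. pabs p (- prep X n)) \<longlonglongrightarrow> pnorm p X"
    using pnorm_class[OF p c(1)] c(2) pabs_uminus[OF p] by simp
  thus ?thesis unfolding pneg_def using pnorm_class[OF p cauchy_uminus[OF p c(1)]] LIMSEQ_unique by blast
qed

lemma padd_zero_const: "padd p (pzero p) (pconst p c) = pconst p c"
  unfolding pzero_def pconst_def using padd_class[OF p cauchy_const[OF p] cauchy_const[OF p]] by simp

lemma padd_zero_left: assumes "X \<in> Qp p" shows "padd p (pzero p) X = X"
proof -
  obtain s where s: "p_cauchy p s" "X = pclass p s" using Qp_cases[OF p assms(1)] by blast
  show ?thesis unfolding pzero_def s(2) using padd_class[OF p cauchy_const[OF p] s(1)] by simp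
qed

lemma pconst_nonzero: "c \<noteq> 0 \<Longrightarrow> pconst p c \<noteq> pzero p"
  using pnorm_const[OF p, of c] pnorm_zero[OF p] p by auto

lemma pmul_const_zero: "pmul p (pconst p q) (pzero p) = pzero p"
  unfolding pconst_def pzero_def using pmul_class[OF p cauchy_const[OF p] cauchy_const[OF p]] by simp

lemma pmul_one: assumes "X \<in> Qp p" shows "pmul p (pconst p 1) X = X"
proof -
  obtain s where s: "p_cauchy p s" "X = pclass p s" using Qp_cases[OF p assms(1)] by blast
  show ?thesis unfolding pconst_def s(2) using pmul_class[OF p cauchy_const[OF p] s(1)] by simp
qed

lemma pzero_norm_iff: assumes "X \<in> Qp p" shows "X = pzero p \<longleftrightarrow> pnorm p X = 0"
proof -
  obtain s where s: "p_cauchy p s" "X = pclass p s" using Qp_cases[OF p assms(1)] by blast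
  show ?thesis using pzero_iff_norm[OF p s(1)] s(2) by simp
qed

lemma pnorm_pos: assumes "X \<in> Qp p" "X \<noteq> pzero p" shows "pnorm p X > 0"
  using pnorm_nonneg[OF p assms(1)] pzero_norm_iff assms by fastforce

lemma combo_class:
  assumes s: "p_cauchy p s" and t: "p_cauchy p t"
  shows "p_cauchy p (\<lambda>n. q * s n - t n)"
    "padd p (pclass p t) (pclass p (\<lambda>n. q * s n - t n)) = pmul p (pconst p q) (pclass p s)"
proof -
  show c: "p_cauchy p (\<lambda>n. q * s n - t n)"
    using cauchy_diff[OF p cauchy_mult[OF p cauchy_const[OF p] s] t] .
  have "padd p (pclass p t) (pclass p (\<lambda>n. q * s n - t n)) = pclass p (\<lambda>n. t n + (q * s n - t n))"
    using padd_class[OF p t c] .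
  also have "\<dots> = pclass p (\<lambda>n. q * s n)" by simp
  also have "\<dots> = pmul p (pconst p q) (pclass p s)"
    unfolding pconst_def using pmul_class[OF p cauchy_const[OF p] s] by simp
  finally show "padd p (pclass p t) (pclass p (\<lambda>n. q * s n - t n)) = pmul p (pconst p q) (pclass p s)" .
qed

lemma combo_norm_le:
  assumes s: "p_cauchy p s" and t: "p_cauchy p t"
  shows "pnorm p (pclass p (\<lambda>n. q * s n - t n)) \<le> max (pabs p q * pnorm p (pclass p s)) (pnorm p (pclass p t))"
proof (rule lim_le_lim[OF pnorm_class[OF p combo_class(1)[OF s t]]
      tendsto_max[OF tendsto_mult_left[OF pnorm_class[OF p s]] pnorm_class[OF p t]]])
  fix n show "pabs p (q * s n - t n) \<le> max (pabs p q * pabs p (s n)) (pabs p (t n))"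
    using pabs_ultra_diff[OF p, of "q * s n" "t n"] pabs_mult[OF p] by simp
qed

lemma local_approx:
  assumes s: "p_cauchy p s" and t: "p_cauchy p t" and nz: "pclass p s \<noteq> pzero p" and e: "\<epsilon> > 0"
  shows "\<exists>\<beta> \<delta>. \<delta> > 0 \<and> (\<forall>q. pabs p (q - \<beta>) < \<delta> \<longrightarrow> pnorm p (pclass p (\<lambda>n. q * s n - t n)) < \<epsilon>)"
proof -
  let ?c = "pnorm p (pclass p s)"
  have nn: "\<not> (\<lambda>n. pabs p (s n)) \<longlonglongrightarrow> 0" using nz pzero_iff[OF p s] by simp
  obtain N0 where N0: "\<forall>n\<ge>N0. pabs p (s n) = ?c" using eventually_const_abs[OF p s nn] by blast
  have cpos: "?c > 0" using pnorm_pos[OF pclass_in_Qp[OF p s] nz] .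
  obtain M where M: "M > 0" "\<And>n. pabs p (t n) \<le> M" using cauchy_bounded[OF p t] by blast
  define Q where "Q = max (M / ?c) 1"
  have Q1: "Q \<ge> 1" unfolding Q_def by simp
  define \<eta> where "\<eta> = min (\<epsilon> / (2 * Q)) (\<epsilon> / 2)"
  have eta: "\<eta> > 0" unfolding \<eta>_def using e Q1 by simp
  have etaQ: "Q * \<eta> \<le> \<epsilon> / 2" unfolding \<eta>_def using Q1 e
    by (simp add: min_def field_simps)
  have eta2: "\<eta> \<le> \<epsilon> / 2" unfolding \<eta>_def by simp
  obtain N1 where N1: "\<forall>m\<ge>N1. \<forall>n\<ge>N1. pabs p (s m - s n) < \<eta>" using s eta unfolding p_cauchy_def by blast
  obtain N2 where N2: "\<forall>m\<ge>N2. \<forall>n\<ge>N2. pabs p (t m - t n) < \<eta>" using t eta unfolding p_cauchy_def by blast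
  define N where "N = max N0 (max N1 N2)"
  define \<alpha> where "\<alpha> = s N"
  define \<gamma> where "\<gamma> = t N"
  have aabs: "pabs p \<alpha> = ?c" unfolding \<alpha>_def N_def using N0 by simp
  have anz: "\<alpha> \<noteq> 0" using aabs cpos by auto
  define \<delta> where "\<delta> = min 1 (\<epsilon> / (2 * ?c))"
  have dpos: "\<delta> > 0" unfolding \<delta>_def using e cpos by simp
  show ?thesis
  proof (intro exI[of _ "\<gamma> / \<alpha>"] exI[of _ \<delta>] conjI allI impI dpos)
    fix q assume q: "pabs p (q - \<gamma> / \<alpha>) < \<delta>"
    have babs: "pabs p (\<gamma> / \<alpha>) \<le> M / ?c"
      using pabs_divide[OF p, of \<gamma> \<alpha>] aabs M(2)[of N] cpos unfolding \<gamma>_def by (simp add: divide_right_mono)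
    have "pabs p q \<le> max (pabs p (\<gamma> / \<alpha>)) (pabs p (q - \<gamma> / \<alpha>))"
      using pabs_ultra[OF p, of "\<gamma> / \<alpha>" "q - \<gamma> / \<alpha>"] by simp
    also have "\<dots> \<le> Q" unfolding Q_def using babs q unfolding \<delta>_def by auto
    finally have qQ: "pabs p q \<le> Q" .
    have bound: "pabs p (q * s n - t n) \<le> \<epsilon> / 2" if n: "n \<ge> N" for n
    proof -
      have eq: "q * s n - t n = (q * (s n - \<alpha>) + \<alpha> * (q - \<gamma> / \<alpha>)) + (\<gamma> - t n)"
        using anz by (simp add: field_simps)
      have "pabs p (s n - \<alpha>) < \<eta>" unfolding \<alpha>_def using N1 n unfolding N_def by simp
      hence "pabs p q * pabs p (s n - \<alpha>) \<le> Q * \<eta>"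
        using qQ Q1 pabs_nonneg[of p] by (intro mult_mono) auto
      hence a: "pabs p (q * (s n - \<alpha>)) \<le> \<epsilon> / 2" using etaQ pabs_mult[OF p] by simp
      have "pabs p (\<alpha> * (q - \<gamma> / \<alpha>)) = ?c * pabs p (q - \<gamma> / \<alpha>)" using pabs_mult[OF p] aabs by simp
      also have "\<dots> \<le> ?c * (\<epsilon> / (2 * ?c))"
        using q cpos unfolding \<delta>_def by (intro mult_left_mono) auto
      also have "\<dots> = \<epsilon> / 2" using cpos by simp
      finally have b: "pabs p (\<alpha> * (q - \<gamma> / \<alpha>)) \<le> \<epsilon> / 2" .
      have "pabs p (\<gamma> - t n) < \<eta>" unfolding \<gamma>_def using N2 n unfolding N_def by simp
      hence c: "pabs p (\<gamma> - t n) \<le> \<epsilon> / 2" using eta2 by simp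
      have "pabs p (q * (s n - \<alpha>) + \<alpha> * (q - \<gamma> / \<alpha>)) \<le> \<epsilon> / 2"
        using pabs_ultra[OF p, of "q * (s n - \<alpha>)" "\<alpha> * (q - \<gamma> / \<alpha>)"] a b by simp
      thus ?thesis unfolding eq using pabs_ultra[OF p, of "q * (s n - \<alpha>) + \<alpha> * (q - \<gamma> / \<alpha>)" "\<gamma> - t n"] c
        by simp
    qed
    have "pnorm p (pclass p (\<lambda>n. q * s n - t n)) \<le> \<epsilon> / 2"
      by (rule LIMSEQ_le_const2[OF pnorm_class[OF p combo_class(1)[OF s t]]]) (use bound in blast)
    thus "pnorm p (pclass p (\<lambda>n. q * s n - t n)) < \<epsilon>" using e by simp
  qed
qed

end


lemma Af_Qp: "a \<in> Af \<Longrightarrow> prime p \<Longrightarrow> a p \<in> Qp p"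
  unfolding Af_def by blast

lemma Af_np: "a \<in> Af \<Longrightarrow> \<not> prime p \<Longrightarrow> a p = {}"
  unfolding Af_def by blast

lemma Af_fin: "a \<in> Af \<Longrightarrow> finite {p. prime p \<and> a p \<notin> Zp p}"
  unfolding Af_def by blast

lemma AfI:
  assumes "\<And>p. prime p \<Longrightarrow> a p \<in> Qp p" "\<And>p. \<not> prime p \<Longrightarrow> a p = {}"
    "finite {p. prime p \<and> a p \<notin> Zp p}"
  shows "a \<in> Af"
  unfolding Af_def using assms by blast

lemma Zp_iff: "X \<in> Zp p \<longleftrightarrow> X \<in> Qp p \<and> pnorm p X \<le> 1"
  unfolding Zp_def by simp

lemma af_add_prime: "prime p \<Longrightarrow> af_add a b p = padd p (a p) (b p)"
  unfolding af_add_def by simp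

lemma af_add_in: assumes a: "a \<in> Af" and b: "b \<in> Af" shows "af_add a b \<in> Af"
proof (rule AfI)
  fix p :: nat assume p: "prime p"
  show "af_add a b p \<in> Qp p" using padd_in[OF p Af_Qp[OF a p] Af_Qp[OF b p]] af_add_prime[OF p] by simp
next
  fix p :: nat assume "\<not> prime p" thus "af_add a b p = {}" unfolding af_add_def by simp
next
  have "{p. prime p \<and> af_add a b p \<notin> Zp p} \<subseteq> {p. prime p \<and> a p \<notin> Zp p} \<union> {p. prime p \<and> b p \<notin> Zp p}"
  proof
    fix p assume "p \<in> {p. prime p \<and> af_add a b p \<notin> Zp p}"
    hence p: "prime p" and nz: "af_add a b p \<notin> Zp p" by auto
    have inq: "padd p (a p) (b p) \<in> Qp p" using padd_in[OF p Af_Qp[OF a p] Af_Qp[OF b p]] .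
    show "p \<in> {p. prime p \<and> a p \<notin> Zp p} \<union> {p. prime p \<and> b p \<notin> Zp p}"
    proof (rule ccontr)
      assume "\<not> ?thesis"
      hence "a p \<in> Zp p" "b p \<in> Zp p" using p by auto
      hence "pnorm p (padd p (a p) (b p)) \<le> 1"
        using pnorm_add_le[OF p Af_Qp[OF a p] Af_Qp[OF b p]] Zp_iff by fastforce
      moreover have "af_add a b p = padd p (a p) (b p)" using af_add_prime[OF p] .
      ultimately have "af_add a b p \<in> Zp p" using inq unfolding Zp_iff by simp
      thus False using nz by blast
    qed
  qed
  thus "finite {p. prime p \<and> af_add a b p \<notin> Zp p}"
    using Af_fin[OF a] Af_fin[OF b] finite_subset by blast
qed

lemma af_nbhd_Af: "af_nbhd F V \<subseteq> Af"
  unfolding af_nbhd_def by blast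

lemma qp_nhd0_Zp: "qp_nhd0 p (Zp p)"
  unfolding qp_nhd0_def Zp_def by (auto intro: exI[of _ 1])

lemma qp_nhd0_Int: assumes "qp_nhd0 p A" "qp_nhd0 p B" shows "qp_nhd0 p (A \<inter> B)"
proof -
  obtain e1 where e1: "e1 > 0" "{x \<in> Qp p. pnorm p x < e1} \<subseteq> A" using assms(1) unfolding qp_nhd0_def by blast
  obtain e2 where e2: "e2 > 0" "{x \<in> Qp p. pnorm p x < e2} \<subseteq> B" using assms(2) unfolding qp_nhd0_def by blast
  have "{x \<in> Qp p. pnorm p x < min e1 e2} \<subseteq> A \<inter> B" using e1 e2 by auto
  thus ?thesis using assms e1 e2 unfolding qp_nhd0_def by (intro conjI exI[of _ "min e1 e2"]) auto
qed

definition afpred :: "adele set \<Rightarrow> bool" where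
  "afpred U \<longleftrightarrow> U \<subseteq> Af \<and>
     (\<forall>a\<in>U. \<exists>F V. finite F \<and> F \<subseteq> {p. prime p} \<and> (\<forall>p\<in>F. qp_nhd0 p (V p))
        \<and> af_add a ` af_nbhd F V \<subseteq> U)"

lemma afpred_top: "istopology afpred"
  unfolding istopology_def
proof (intro conjI allI impI ballI)
  fix S T assume S: "afpred S" and T: "afpred T"
  show "afpred (S \<inter> T)" unfolding afpred_def
  proof (intro conjI ballI)
    show "S \<inter> T \<subseteq> Af" using S unfolding afpred_def by blast
    fix a assume a: "a \<in> S \<inter> T"
    obtain F1 V1 where 1: "finite F1" "F1 \<subseteq> {p. prime p}" "\<forall>p\<in>F1. qp_nhd0 p (V1 p)" "af_add a ` af_nbhd F1 V1 \<subseteq> S"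
      using S a unfolding afpred_def by blast
    obtain F2 V2 where 2: "finite F2" "F2 \<subseteq> {p. prime p}" "\<forall>p\<in>F2. qp_nhd0 p (V2 p)" "af_add a ` af_nbhd F2 V2 \<subseteq> T"
      using T a unfolding afpred_def by blast
    define V where "V p = (if p \<in> F1 then V1 p else Zp p) \<inter> (if p \<in> F2 then V2 p else Zp p)" for p
    have q1: "qp_nhd0 p (if p \<in> F1 then V1 p else Zp p)" for p
      using 1(3) qp_nhd0_Zp[of p] by (cases "p \<in> F1") simp_all
    have q2: "qp_nhd0 p (if p \<in> F2 then V2 p else Zp p)" for p
      using 2(3) qp_nhd0_Zp[of p] by (cases "p \<in> F2") simp_all
    have nb: "\<forall>p\<in>F1 \<union> F2. qp_nhd0 p (V p)"
      unfolding V_def using qp_nhd0_Int[OF q1 q2] by blast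
    have s1: "af_nbhd (F1 \<union> F2) V \<subseteq> af_nbhd F1 V1"
    proof
      fix b assume "b \<in> af_nbhd (F1 \<union> F2) V"
      hence b: "b \<in> Af" "\<forall>p\<in>F1 \<union> F2. b p \<in> V p" "\<forall>p. prime p \<and> p \<notin> F1 \<union> F2 \<longrightarrow> b p \<in> Zp p"
        unfolding af_nbhd_def by blast+
      have "\<forall>p\<in>F1. b p \<in> V1 p"
      proof
        fix p assume pF: "p \<in> F1"
        hence "b p \<in> V p" using b(2) by blast
        thus "b p \<in> V1 p" using pF unfolding V_def by simp
      qed
      moreover have "\<forall>p. prime p \<and> p \<notin> F1 \<longrightarrow> b p \<in> Zp p"
      proof (intro allI impI)
        fix p assume p: "prime p \<and> p \<notin> F1"
        show "b p \<in> Zp p"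
        proof (cases "p \<in> F2")
          case True
          hence "b p \<in> V p" using b(2) by blast
          thus ?thesis using p unfolding V_def by simp
        next
          case False thus ?thesis using b(3) p by blast
        qed
      qed
      ultimately show "b \<in> af_nbhd F1 V1" unfolding af_nbhd_def using b(1) by blast
    qed
    have s2: "af_nbhd (F1 \<union> F2) V \<subseteq> af_nbhd F2 V2"
    proof
      fix b assume "b \<in> af_nbhd (F1 \<union> F2) V"
      hence b: "b \<in> Af" "\<forall>p\<in>F1 \<union> F2. b p \<in> V p" "\<forall>p. prime p \<and> p \<notin> F1 \<union> F2 \<longrightarrow> b p \<in> Zp p"
        unfolding af_nbhd_def by blast+
      have "\<forall>p\<in>F2. b p \<in> V2 p"
      proof
        fix p assume pF: "p \<in> F2"
        hence "b p \<in> V p" using b(2) by blast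
        thus "b p \<in> V2 p" using pF unfolding V_def by simp
      qed
      moreover have "\<forall>p. prime p \<and> p \<notin> F2 \<longrightarrow> b p \<in> Zp p"
      proof (intro allI impI)
        fix p assume p: "prime p \<and> p \<notin> F2"
        show "b p \<in> Zp p"
        proof (cases "p \<in> F1")
          case True
          hence "b p \<in> V p" using b(2) by blast
          thus ?thesis using p unfolding V_def by simp
        next
          case False thus ?thesis using b(3) p by blast
        qed
      qed
      ultimately show "b \<in> af_nbhd F2 V2" unfolding af_nbhd_def using b(1) by blast
    qed
    have img: "af_add a ` af_nbhd (F1 \<union> F2) V \<subseteq> S \<inter> T"
      using image_mono[OF s1, of "af_add a"] image_mono[OF s2, of "af_add a"] 1(4) 2(4) by blast
    have fin: "finite (F1 \<union> F2)" "F1 \<union> F2 \<subseteq> {p. prime p}" using 1 2 by auto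
    show "\<exists>F V. finite F \<and> F \<subseteq> {p. prime p} \<and> (\<forall>p\<in>F. qp_nhd0 p (V p)) \<and> af_add a ` af_nbhd F V \<subseteq> S \<inter> T"
      using fin nb img by blast
  qed
next
  fix K assume K: "\<forall>S\<in>K. afpred S"
  show "afpred (\<Union>K)" unfolding afpred_def
  proof (intro conjI ballI)
    show "\<Union>K \<subseteq> Af" using K unfolding afpred_def by blast
    fix a assume "a \<in> \<Union>K"
    then obtain S where S: "S \<in> K" "a \<in> S" by blast
    hence "afpred S" using K by blast
    then obtain F V where FV: "finite F" "F \<subseteq> {p. prime p}" "\<forall>p\<in>F. qp_nhd0 p (V p)" "af_add a ` af_nbhd F V \<subseteq> S"
      using S(2) unfolding afpred_def by blast
    have "af_add a ` af_nbhd F V \<subseteq> \<Union>K" using FV(4) S(1) by blast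
    thus "\<exists>F V. finite F \<and> F \<subseteq> {p. prime p} \<and> (\<forall>p\<in>F. qp_nhd0 p (V p)) \<and> af_add a ` af_nbhd F V \<subseteq> \<Union>K"
      using FV(1-3) by blast
  qed
qed

lemma openin_Af: "openin Af_top U \<longleftrightarrow> afpred U"
  unfolding Af_top_def afpred_def[abs_def, symmetric] using afpred_top by simp

lemma afpred_Af: "afpred Af"
  unfolding afpred_def
proof (intro conjI ballI)
  fix a assume a: "a \<in> Af"
  have "af_add a ` af_nbhd {} (\<lambda>_. {}) \<subseteq> Af" using af_add_in[OF a] af_nbhd_Af by blast
  thus "\<exists>F V. finite F \<and> F \<subseteq> {p. prime p} \<and> (\<forall>p\<in>F. qp_nhd0 p (V p)) \<and> af_add a ` af_nbhd F V \<subseteq> Af"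
    by (intro exI[of _ "{}"] exI[of _ "\<lambda>_. {}"]) simp
qed simp

lemma topspace_Af: "topspace Af_top = Af"
proof -
  have "openin Af_top Af" using afpred_Af openin_Af by simp
  moreover have "\<And>U. openin Af_top U \<Longrightarrow> U \<subseteq> Af" using openin_Af afpred_def by blast
  ultimately show ?thesis unfolding topspace_def by blast
qed

definition nzset :: "nat set \<Rightarrow> adele set" where
  "nzset G = {x \<in> Af. \<forall>p\<in>G. x p \<noteq> pzero p}"

lemma open_nzset: assumes G: "finite G" "G \<subseteq> {p. prime p}" shows "openin Af_top (nzset G)"
  unfolding openin_Af afpred_def
proof (intro conjI ballI)
  show "nzset G \<subseteq> Af" unfolding nzset_def by blast
  fix x assume x: "x \<in> nzset G"
  hence xA: "x \<in> Af" unfolding nzset_def by blast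
  define V where "V p = {y \<in> Qp p. pnorm p y < pnorm p (x p)}" for p
  have nb: "\<forall>p\<in>G. qp_nhd0 p (V p)"
  proof
    fix p assume pG: "p \<in> G"
    hence p: "prime p" using G by blast
    have "pnorm p (x p) > 0" using pnorm_pos[OF p Af_Qp[OF xA p]] x pG unfolding nzset_def by blast
    thus "qp_nhd0 p (V p)" unfolding qp_nhd0_def V_def by blast
  qed
  have "af_add x ` af_nbhd G V \<subseteq> nzset G"
  proof
    fix z assume "z \<in> af_add x ` af_nbhd G V"
    then obtain n where n: "n \<in> af_nbhd G V" "z = af_add x n" by blast
    have nA: "n \<in> Af" using n af_nbhd_Af by blast
    have "z p \<noteq> pzero p" if pG: "p \<in> G" for p
    proof -
      have p: "prime p" using pG G by blast
      have "n p \<in> V p" using n pG unfolding af_nbhd_def by blast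
      hence "pnorm p (n p) < pnorm p (x p)" unfolding V_def by blast
      thus ?thesis using padd_nonzero[OF p Af_Qp[OF xA p] Af_Qp[OF nA p]] n(2) af_add_prime[OF p] by simp
    qed
    thus "z \<in> nzset G" unfolding nzset_def using af_add_in[OF xA nA] n(2) by blast
  qed
  thus "\<exists>F V. finite F \<and> F \<subseteq> {p. prime p} \<and> (\<forall>p\<in>F. qp_nhd0 p (V p)) \<and> af_add x ` af_nbhd F V \<subseteq> nzset G"
    using G nb by blast
qed


definition orbit :: "adele \<Rightarrow> adele set" where
  "orbit a = (\<lambda>g. div_action g a) ` {r::rat. r > 0}"

lemma div_action_prime: "prime p \<Longrightarrow> div_action r a p = pmul p (pconst p (inverse r)) (a p)"
  unfolding div_action_def af_mul_def af_diag_def by simp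

lemma div_action_np: "\<not> prime p \<Longrightarrow> div_action r a p = {}"
  unfolding div_action_def af_mul_def by simp

lemma closure_sub:
  assumes a: "a \<in> Af" and c: "c \<in> Af_top closure_of orbit a"
  shows "S_zero a \<subseteq> S_zero c"
proof
  fix p assume "p \<in> S_zero a"
  hence p: "prime p" and ap: "a p = pzero p" unfolding S_zero_def by auto
  have cA: "c \<in> Af" using c in_closure_of topspace_Af by metis
  show "p \<in> S_zero c"
  proof (rule ccontr)
    assume "p \<notin> S_zero c"
    hence "c p \<noteq> pzero p" using p unfolding S_zero_def by auto
    hence cin: "c \<in> nzset {p}" using cA unfolding nzset_def by auto
    have op: "openin Af_top (nzset {p})" using open_nzset[of "{p}"] p by simp
    obtain y where y: "y \<in> orbit a" "y \<in> nzset {p}"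
      using c cin op unfolding in_closure_of by blast
    then obtain r where "y = div_action r a" unfolding orbit_def by blast
    hence "y p = pzero p" using div_action_prime[OF p] ap pmul_const_zero[OF p] by simp
    thus False using y(2) unfolding nzset_def by simp
  qed
qed

lemma Zp_Qp: "X \<in> Zp p \<Longrightarrow> X \<in> Qp p" unfolding Zp_def by simp

lemma density:
  assumes a: "a \<in> Af" and c: "c \<in> Af" and sub: "S_zero a \<subseteq> S_zero c"
  shows "c \<in> Af_top closure_of orbit a"
  unfolding in_closure_of topspace_Af
proof (intro conjI allI impI c)
  fix T assume "c \<in> T \<and> openin Af_top T"
  hence cT: "c \<in> T" and T: "afpred T" using openin_Af by auto
  obtain F V where FV: "finite F" "F \<subseteq> {p. prime p}" "\<forall>p\<in>F. qp_nhd0 p (V p)" "af_add c ` af_nbhd F V \<subseteq> T"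
    using T cT unfolding afpred_def by blast
  have "\<forall>p\<in>F. \<exists>e>0. {x \<in> Qp p. pnorm p x < e} \<subseteq> V p" using FV(3) unfolding qp_nhd0_def by blast
  then obtain eps where eps: "\<forall>p\<in>F. eps p > 0 \<and> {x \<in> Qp p. pnorm p x < eps p} \<subseteq> V p"
    using bchoice[of F "\<lambda>p e. e > 0 \<and> {x \<in> Qp p. pnorm p x < e} \<subseteq> V p"] by blast
  define F' where "F' = F \<union> {p. prime p \<and> (a p \<notin> Zp p \<or> c p \<notin> Zp p)}"
  have "{p. prime p \<and> (a p \<notin> Zp p \<or> c p \<notin> Zp p)} = {p. prime p \<and> a p \<notin> Zp p} \<union> {p. prime p \<and> c p \<notin> Zp p}"
    by blast
  hence F'fin: "finite F'" unfolding F'_def using FV(1) Af_fin[OF a] Af_fin[OF c] by simp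
  have F'pr: "F' \<subseteq> {p. prime p}" unfolding F'_def using FV(2) by auto
  define \<epsilon> where "\<epsilon> p = (if p \<in> F then eps p else 1)" for p
  have epos: "\<epsilon> p > 0" for p unfolding \<epsilon>_def using eps by auto
  define P0 where "P0 = {p \<in> F'. a p \<noteq> pzero p}"
  have P0fin: "finite P0" unfolding P0_def using F'fin by simp
  have P0pr: "\<forall>p\<in>P0. prime p" unfolding P0_def using F'pr by auto
  let ?s = "\<lambda>p. prep (a p)" and ?t = "\<lambda>p. prep (c p)"
  have sC: "p_cauchy p (?s p)" "a p = pclass p (?s p)" if "prime p" for p
    using Qp_rep[OF that Af_Qp[OF a that]] by auto
  have tC: "p_cauchy p (?t p)" "c p = pclass p (?t p)" if "prime p" for p
    using Qp_rep[OF that Af_Qp[OF c that]] by auto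
  have "\<forall>p\<in>P0. \<exists>\<beta> \<delta>. \<delta> > 0 \<and> (\<forall>q. pabs p (q - \<beta>) < \<delta> \<longrightarrow> pnorm p (pclass p (\<lambda>n. q * ?s p n - ?t p n)) < \<epsilon> p)"
  proof
    fix p assume pP: "p \<in> P0"
    hence p: "prime p" using P0pr by blast
    have "pclass p (?s p) \<noteq> pzero p" using pP sC(2)[OF p] unfolding P0_def by auto
    thus "\<exists>\<beta> \<delta>. \<delta> > 0 \<and> (\<forall>q. pabs p (q - \<beta>) < \<delta> \<longrightarrow> pnorm p (pclass p (\<lambda>n. q * ?s p n - ?t p n)) < \<epsilon> p)"
      using local_approx[OF p sC(1)[OF p] tC(1)[OF p] _ epos] by blast
  qed
  then obtain \<beta> where "\<forall>p\<in>P0. \<exists>\<delta>. \<delta> > 0 \<and> (\<forall>q. pabs p (q - \<beta> p) < \<delta> \<longrightarrow> pnorm p (pclass p (\<lambda>n. q * ?s p n - ?t p n)) < \<epsilon> p)"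
    using bchoice[of P0 "\<lambda>p \<beta>. \<exists>\<delta>. \<delta> > 0 \<and> (\<forall>q. pabs p (q - \<beta>) < \<delta> \<longrightarrow> pnorm p (pclass p (\<lambda>n. q * ?s p n - ?t p n)) < \<epsilon> p)"]
    by blast
  then obtain \<delta> where bd: "\<forall>p\<in>P0. \<delta> p > 0 \<and> (\<forall>q. pabs p (q - \<beta> p) < \<delta> p \<longrightarrow> pnorm p (pclass p (\<lambda>n. q * ?s p n - ?t p n)) < \<epsilon> p)"
    using bchoice[of P0 "\<lambda>p \<delta>. \<delta> > 0 \<and> (\<forall>q. pabs p (q - \<beta> p) < \<delta> \<longrightarrow> pnorm p (pclass p (\<lambda>n. q * ?s p n - ?t p n)) < \<epsilon> p)"]
    by blast
  obtain q where q: "q > 0" "\<forall>p\<in>P0. pabs p (q - \<beta> p) < \<delta> p" "\<forall>l. prime l \<and> l \<notin> P0 \<longrightarrow> pabs l q \<le> 1"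
    using approx[OF P0fin P0pr, of \<delta> \<beta>] bd by blast
  define n :: adele where "n p = (if prime p then pclass p (\<lambda>m. q * ?s p m - ?t p m) else {})" for p
  have nC: "p_cauchy p (\<lambda>m. q * ?s p m - ?t p m)" if "prime p" for p
    using combo_class(1)[OF that sC(1)[OF that] tC(1)[OF that]] .
  have nQ: "n p \<in> Qp p" if "prime p" for p unfolding n_def using pclass_in_Qp[OF that nC[OF that]] that by simp
  have key: "(p \<in> F' \<longrightarrow> pnorm p (n p) < \<epsilon> p) \<and> (p \<notin> F' \<longrightarrow> pnorm p (n p) \<le> 1)" if p: "prime p" for p
  proof (cases "p \<in> P0")
    case True
    have np: "n p = pclass p (\<lambda>m. q * ?s p m - ?t p m)" unfolding n_def using p by simp
    have "pabs p (q - \<beta> p) < \<delta> p" using q(2) True by blast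
    hence "pnorm p (n p) < \<epsilon> p" unfolding np using bd True by blast
    moreover have "p \<in> F'" using True unfolding P0_def by blast
    ultimately show ?thesis by simp
  next
    case False
    have le: "pnorm p (n p) \<le> max (pabs p q * pnorm p (a p)) (pnorm p (c p))"
      using combo_norm_le[OF p sC(1)[OF p] tC(1)[OF p], of q] sC(2)[OF p] tC(2)[OF p] p unfolding n_def by simp
    show ?thesis
    proof (cases "p \<in> F'")
      case True
      hence "a p = pzero p" using False unfolding P0_def by auto
      moreover hence "c p = pzero p" using sub p unfolding S_zero_def by auto
      ultimately have "pnorm p (n p) \<le> 0" using le pnorm_zero[OF p] by simp
      thus ?thesis using True epos[of p] by simp
    next
      case nF: False
      hence "a p \<in> Zp p" "c p \<in> Zp p" unfolding F'_def using p by auto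
      hence an: "pnorm p (a p) \<le> 1" "pnorm p (c p) \<le> 1" unfolding Zp_def by auto
      have "pabs p q \<le> 1" using q(3) p False by blast
      hence "pabs p q * pnorm p (a p) \<le> 1"
        using an pnorm_nonneg[OF p Af_Qp[OF a p]] pabs_nonneg[of p q] by (simp add: mult_le_one)
      thus ?thesis using le an nF by simp
    qed
  qed
  have nZ: "n p \<in> Zp p" if p: "prime p" "p \<notin> F" for p
  proof -
    have "pnorm p (n p) \<le> 1"
    proof (cases "p \<in> F'")
      case True
      hence "pnorm p (n p) < \<epsilon> p" using key[OF p(1)] by blast
      thus ?thesis using p(2) unfolding \<epsilon>_def by simp
    next
      case False thus ?thesis using key[OF p(1)] by blast
    qed
    thus ?thesis unfolding Zp_def using nQ[OF p(1)] by simp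
  qed
  have nA: "n \<in> Af"
  proof (rule AfI)
    show "\<And>p. prime p \<Longrightarrow> n p \<in> Qp p" by (rule nQ)
    show "\<And>p. \<not> prime p \<Longrightarrow> n p = {}" unfolding n_def by simp
    have "{p. prime p \<and> n p \<notin> Zp p} \<subseteq> F"
      using nZ by blast
    thus "finite {p. prime p \<and> n p \<notin> Zp p}" using FV(1) finite_subset by blast
  qed
  have nN: "n \<in> af_nbhd F V"
    unfolding af_nbhd_def
  proof (intro CollectI conjI nA ballI allI impI)
    fix p assume pF: "p \<in> F"
    hence p: "prime p" using FV(2) by blast
    have "p \<in> F'" using pF unfolding F'_def by blast
    hence "pnorm p (n p) < \<epsilon> p" using key[OF p] by blast
    hence "pnorm p (n p) < eps p" using pF unfolding \<epsilon>_def by simp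
    hence "n p \<in> {x \<in> Qp p. pnorm p x < eps p}" using nQ[OF p] by blast
    thus "n p \<in> V p" using eps pF by blast
  next
    fix p assume "prime p \<and> p \<notin> F" thus "n p \<in> Zp p" using nZ by blast
  qed
  have eq: "af_add c n = div_action (inverse q) a"
  proof
    fix p show "af_add c n p = div_action (inverse q) a p"
    proof (cases "prime p")
      case True
      have "af_add c n p = padd p (pclass p (?t p)) (pclass p (\<lambda>m. q * ?s p m - ?t p m))"
        using af_add_prime[OF True] tC(2)[OF True] True unfolding n_def by simp
      also have "\<dots> = pmul p (pconst p q) (pclass p (?s p))"
        using combo_class(2)[OF True sC(1)[OF True] tC(1)[OF True]] .
      also have "\<dots> = div_action (inverse q) a p" using div_action_prime[OF True] sC(2)[OF True] by simp
      finally show ?thesis .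
    next
      case False thus ?thesis unfolding af_add_def using div_action_np[OF False] by simp
    qed
  qed
  have "div_action (inverse q) a \<in> orbit a" unfolding orbit_def using q(1) by auto
  moreover have "af_add c n \<in> af_add c ` af_nbhd F V" using nN by (rule imageI)
  hence "div_action (inverse q) a \<in> T" using FV(4) eq by auto
  ultimately show "\<exists>y. y \<in> orbit a \<and> y \<in> T" by blast
qed

lemma closure_orbit: assumes a: "a \<in> Af"
  shows "Af_top closure_of orbit a = {c \<in> Af. S_zero a \<subseteq> S_zero c}"
proof
  show "Af_top closure_of orbit a \<subseteq> {c \<in> Af. S_zero a \<subseteq> S_zero c}"
    using closure_sub[OF a] closure_of_subset_topspace[of Af_top "orbit a"] topspace_Af by blast
  show "{c \<in> Af. S_zero a \<subseteq> S_zero c} \<subseteq> Af_top closure_of orbit a"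
    using density[OF a] by blast
qed

definition eT :: "nat set \<Rightarrow> adele" where
  "eT T = (\<lambda>p. if prime p then (if p \<in> T then pzero p else pconst p 1) else {})"

lemma eT_Af: "eT T \<in> Af"
proof (rule AfI)
  fix p :: nat assume p: "prime p"
  show "eT T p \<in> Qp p" unfolding eT_def using p pzero_in[OF p] pconst_in[OF p] by simp
next
  fix p :: nat assume "\<not> prime p" thus "eT T p = {}" unfolding eT_def by simp
next
  have "eT T p \<in> Zp p" if p: "prime p" for p
    unfolding eT_def Zp_def using p pzero_in[OF p] pconst_in[OF p] pnorm_zero[OF p] pnorm_const[OF p, of 1] by simp
  hence e: "{p. prime p \<and> eT T p \<notin> Zp p} = {}" by blast
  show "finite {p. prime p \<and> eT T p \<notin> Zp p}" by (subst e) (rule finite.emptyI)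
qed

lemma S_eT: "S_zero (eT T) = {p. prime p \<and> p \<in> T}"
  unfolding S_zero_def eT_def using pconst_nonzero[of _ 1] by auto

lemma S_zero_primes: "S_zero a \<subseteq> {p. prime p}" unfolding S_zero_def by auto

lemma qo_rel_iff:
  "(a, b) \<in> qo_rel Af_top {r::rat. r > 0} div_action \<longleftrightarrow> a \<in> Af \<and> b \<in> Af \<and> S_zero a = S_zero b"
proof -
  have co: "(\<lambda>g. div_action g x) ` {r::rat. r > 0} = orbit x" for x unfolding orbit_def by simp
  have "(a, b) \<in> qo_rel Af_top {r::rat. r > 0} div_action \<longleftrightarrow>
        a \<in> Af \<and> b \<in> Af \<and> {c \<in> Af. S_zero a \<subseteq> S_zero c} = {c \<in> Af. S_zero b \<subseteq> S_zero c}"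
  proof -
    have e: "(a, b) \<in> qo_rel Af_top {r::rat. r > 0} div_action \<longleftrightarrow>
        a \<in> Af \<and> b \<in> Af \<and> Af_top closure_of orbit a = Af_top closure_of orbit b"
      unfolding qo_rel_def co topspace_Af by simp
    show ?thesis
    proof (cases "a \<in> Af \<and> b \<in> Af")
      case True thus ?thesis using e closure_orbit[of a] closure_orbit[of b] by simp
    next
      case False thus ?thesis using e by blast
    qed
  qed
  also have "\<dots> \<longleftrightarrow> a \<in> Af \<and> b \<in> Af \<and> S_zero a = S_zero b"
  proof (intro iffI conjI)
    assume h: "a \<in> Af \<and> b \<in> Af \<and> {c \<in> Af. S_zero a \<subseteq> S_zero c} = {c \<in> Af. S_zero b \<subseteq> S_zero c}"
    have ea: "S_zero (eT (S_zero a)) = S_zero a" using S_eT S_zero_primes by blast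
    have eb: "S_zero (eT (S_zero b)) = S_zero b" using S_eT S_zero_primes by blast
    have "eT (S_zero a) \<in> {c \<in> Af. S_zero a \<subseteq> S_zero c}" using ea eT_Af by simp
    hence 1: "S_zero b \<subseteq> S_zero a" using h ea by auto
    have "eT (S_zero b) \<in> {c \<in> Af. S_zero b \<subseteq> S_zero c}" using eb eT_Af by simp
    hence 2: "S_zero a \<subseteq> S_zero b" using h eb by auto
    show "S_zero a = S_zero b" using 1 2 by blast
  qed auto
  finally show ?thesis .
qed


definition Rel :: "(adele \<times> adele) set" where
  "Rel = {(a, b). a \<in> Af \<and> b \<in> Af \<and> S_zero a = S_zero b}"

lemma qo_Rel: "qo_rel Af_top {r::rat. r > 0} div_action = Rel"
proof (rule set_eqI)
  fix x :: "adele \<times> adele"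
  obtain a b where x: "x = (a, b)" by (cases x)
  show "x \<in> qo_rel Af_top {r::rat. r > 0} div_action \<longleftrightarrow> x \<in> Rel"
    unfolding x Rel_def using qo_rel_iff[of a b] by simp
qed

lemma equiv_Rel: "equiv Af Rel"
proof (rule equivI)
  show "Rel \<subseteq> Af \<times> Af" unfolding Rel_def by blast
  show "refl_on Af Rel" unfolding Rel_def by (rule refl_onI) simp_all
  show "sym Rel" unfolding Rel_def by (rule symI) simp
  show "trans Rel" unfolding Rel_def by (rule transI) simp
qed

lemma class_eq: "a \<in> Af \<Longrightarrow> Rel``{a} = {b \<in> Af. S_zero b = S_zero a}"
  unfolding Rel_def by auto

definition fS :: "adele set \<Rightarrow> nat set" where
  "fS C = S_zero (SOME a. a \<in> C)"

lemma fS_class: assumes a: "a \<in> Af" shows "fS (Rel``{a}) = S_zero a"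
proof -
  have "a \<in> Rel``{a}" using class_eq[OF a] a by simp
  hence "(SOME x. x \<in> Rel``{a}) \<in> Rel``{a}" by (rule someI[where P="\<lambda>x. x \<in> Rel``{a}"])
  thus ?thesis unfolding fS_def using class_eq[OF a] by simp
qed

definition qpred :: "adele set set \<Rightarrow> bool" where
  "qpred W \<longleftrightarrow> W \<subseteq> Af // Rel \<and> openin Af_top (\<Union>W)"

lemma qpred_top: "istopology qpred"
  unfolding istopology_def
proof (intro conjI allI impI)
  fix S T assume S: "qpred S" and T: "qpred T"
  have "\<Union>(S \<inter> T) = \<Union>S \<inter> \<Union>T"
  proof
    show "\<Union>(S \<inter> T) \<subseteq> \<Union>S \<inter> \<Union>T" by blast
    show "\<Union>S \<inter> \<Union>T \<subseteq> \<Union>(S \<inter> T)"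
    proof
      fix x assume "x \<in> \<Union>S \<inter> \<Union>T"
      then obtain C D where CD: "C \<in> S" "D \<in> T" "x \<in> C" "x \<in> D" by blast
      have "C \<in> Af//Rel" "D \<in> Af//Rel" using CD S T unfolding qpred_def by auto
      hence "C = D \<or> C \<inter> D = {}" using quotient_disj[OF equiv_Rel] by blast
      hence "C = D" using CD by blast
      thus "x \<in> \<Union>(S \<inter> T)" using CD by blast
    qed
  qed
  moreover have "openin Af_top (\<Union>S \<inter> \<Union>T)" using S T unfolding qpred_def by (intro openin_Int) simp_all
  moreover have "S \<inter> T \<subseteq> Af // Rel" using S unfolding qpred_def by blast
  ultimately show "qpred (S \<inter> T)" unfolding qpred_def by simp
next
  fix K assume K: "\<forall>W\<in>K. qpred W"
  have "\<Union>(\<Union>K) = \<Union>(Union ` K)" by blast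
  moreover have "openin Af_top (\<Union>(Union ` K))" using K unfolding qpred_def by (intro openin_Union) blast
  moreover have "\<Union>K \<subseteq> Af // Rel" using K unfolding qpred_def by blast
  ultimately show "qpred (\<Union>K)" unfolding qpred_def by simp
qed

lemma Q_eq: "quasi_orbit_space Af_top {r::rat. r > 0} div_action = topology qpred"
  unfolding quasi_orbit_space_def qo_Rel topspace_Af qpred_def ..

lemma openin_Q: "openin (topology qpred) W \<longleftrightarrow> qpred W"
  using qpred_top by simp

lemma topspace_Q: "topspace (topology qpred) = Af // Rel"
proof -
  have "qpred (Af // Rel)" unfolding qpred_def using Union_quotient[OF equiv_Rel] openin_topspace[of Af_top] topspace_Af by simp
  moreover have "\<And>W. qpred W \<Longrightarrow> W \<subseteq> Af // Rel" unfolding qpred_def by blast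
  ultimately show ?thesis unfolding topspace_def openin_Q by blast
qed

definition pcpred :: "nat set set \<Rightarrow> bool" where
  "pcpred W \<longleftrightarrow> W \<subseteq> Pow {p. prime p} \<and>
     (\<forall>T\<in>W. \<exists>G. finite G \<and> G \<subseteq> {p. prime p} \<and> T \<inter> G = {} \<and>
        {T' \<in> Pow {p. prime p}. T' \<inter> G = {}} \<subseteq> W)"

lemma pcpredD:
  assumes "pcpred W" "X \<in> W"
  obtains G where "finite G" "G \<subseteq> {p. prime p}" "X \<inter> G = {}" "{T' \<in> Pow {p. prime p}. T' \<inter> G = {}} \<subseteq> W"
proof -
  have "\<forall>T\<in>W. \<exists>G. finite G \<and> G \<subseteq> {p. prime p} \<and> T \<inter> G = {} \<and> {T' \<in> Pow {p. prime p}. T' \<inter> G = {}} \<subseteq> W"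
    using assms(1) unfolding pcpred_def by (rule conjunct2)
  hence "\<exists>G. finite G \<and> G \<subseteq> {p. prime p} \<and> X \<inter> G = {} \<and> {T' \<in> Pow {p. prime p}. T' \<inter> G = {}} \<subseteq> W"
    using assms(2) by (rule bspec)
  then obtain G where "finite G \<and> G \<subseteq> {p. prime p} \<and> X \<inter> G = {} \<and> {T' \<in> Pow {p. prime p}. T' \<inter> G = {}} \<subseteq> W"
    by (rule exE)
  thus ?thesis using that by (elim conjE)
qed

lemma pcpredI:
  assumes "W \<subseteq> Pow {p. prime p}"
    "\<And>X. X \<in> W \<Longrightarrow> \<exists>G. finite G \<and> G \<subseteq> {p. prime p} \<and> X \<inter> G = {} \<and> {T' \<in> Pow {p. prime p}. T' \<inter> G = {}} \<subseteq> W"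
  shows "pcpred W"
  unfolding pcpred_def using assms by (intro conjI ballI)

lemma pcpred_sub: "pcpred W \<Longrightarrow> W \<subseteq> Pow {p. prime p}"
  unfolding pcpred_def by (rule conjunct1)

lemma pcpred_top: "istopology pcpred"
  unfolding istopology_def
proof (intro conjI allI impI)
  fix S T assume S: "pcpred S" and T: "pcpred T"
  show "pcpred (S \<inter> T)"
  proof (rule pcpredI)
    show "S \<inter> T \<subseteq> Pow {p. prime p}" using pcpred_sub[OF S] by blast
    fix X assume X: "X \<in> S \<inter> T"
    obtain G1 where G1: "finite G1" "G1 \<subseteq> {p. prime p}" "X \<inter> G1 = {}" "{T' \<in> Pow {p. prime p}. T' \<inter> G1 = {}} \<subseteq> S"
      using S by (rule pcpredD) (use X in blast)
    obtain G2 where G2: "finite G2" "G2 \<subseteq> {p. prime p}" "X \<inter> G2 = {}" "{T' \<in> Pow {p. prime p}. T' \<inter> G2 = {}} \<subseteq> T"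
      using T by (rule pcpredD) (use X in blast)
    have sub: "{T' \<in> Pow {p. prime p}. T' \<inter> (G1 \<union> G2) = {}} \<subseteq> S \<inter> T"
    proof
      fix Y assume Y: "Y \<in> {T' \<in> Pow {p. prime p}. T' \<inter> (G1 \<union> G2) = {}}"
      hence "Y \<in> {T' \<in> Pow {p. prime p}. T' \<inter> G1 = {}}" "Y \<in> {T' \<in> Pow {p. prime p}. T' \<inter> G2 = {}}" by auto
      thus "Y \<in> S \<inter> T" using G1(4) G2(4) by blast
    qed
    have "finite (G1 \<union> G2)" "G1 \<union> G2 \<subseteq> {p. prime p}" "X \<inter> (G1 \<union> G2) = {}" using G1(1-3) G2(1-3) by auto
    thus "\<exists>G. finite G \<and> G \<subseteq> {p. prime p} \<and> X \<inter> G = {} \<and> {T' \<in> Pow {p. prime p}. T' \<inter> G = {}} \<subseteq> S \<inter> T"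
      using sub by (intro exI[of _ "G1 \<union> G2"]) simp
  qed
next
  fix K assume K: "\<forall>W\<in>K. pcpred W"
  show "pcpred (\<Union>K)"
  proof (rule pcpredI)
    show "\<Union>K \<subseteq> Pow {p. prime p}" using K pcpred_sub by blast
    fix X assume "X \<in> \<Union>K"
    then obtain W where W: "W \<in> K" "X \<in> W" by blast
    have pW: "pcpred W" using K W(1) by blast
    obtain G where G: "finite G" "G \<subseteq> {p. prime p}" "X \<inter> G = {}" "{T' \<in> Pow {p. prime p}. T' \<inter> G = {}} \<subseteq> W"
      using pW W(2) by (rule pcpredD)
    have "{T' \<in> Pow {p. prime p}. T' \<inter> G = {}} \<subseteq> \<Union>K" using G(4) W(1) by blast
    thus "\<exists>G. finite G \<and> G \<subseteq> {p. prime p} \<and> X \<inter> G = {} \<and> {T' \<in> Pow {p. prime p}. T' \<inter> G = {}} \<subseteq> \<Union>K"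
      using G(1-3) by (intro exI[of _ G]) simp
  qed
qed

lemma PC_eq: "power_cofinite = topology pcpred"
  unfolding power_cofinite_def pcpred_def ..

lemma openin_PC: "openin (topology pcpred) W \<longleftrightarrow> pcpred W"
  using pcpred_top by simp

lemma topspace_PC: "topspace (topology pcpred) = Pow {p. prime p}"
proof -
  have "pcpred (Pow {p. prime p})"
  proof (rule pcpredI)
    fix T :: "nat set" assume "T \<in> Pow {p. prime p}"
    show "\<exists>G. finite G \<and> G \<subseteq> {p. prime p} \<and> T \<inter> G = {} \<and> {T' \<in> Pow {p. prime p}. T' \<inter> G = {}} \<subseteq> Pow {p. prime p}"
      by (rule exI[of _ "{}"]) auto
  qed simp
  moreover have "\<And>W. pcpred W \<Longrightarrow> W \<subseteq> Pow {p. prime p}" by (rule pcpred_sub)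
  ultimately show ?thesis unfolding topspace_def openin_PC by blast
qed

lemma classE: assumes "C \<in> Af // Rel" obtains a where "a \<in> Af" "C = Rel``{a}"
  using assms by (rule quotientE) blast

lemma fS_image: "fS ` (Af // Rel) = Pow {p. prime p}"
proof
  show "fS ` (Af // Rel) \<subseteq> Pow {p. prime p}"
  proof
    fix T assume "T \<in> fS ` (Af // Rel)"
    then obtain C where C: "C \<in> Af // Rel" "T = fS C" by blast
    obtain a where a: "a \<in> Af" "C = Rel``{a}" using C(1) by (rule classE)
    show "T \<in> Pow {p. prime p}" using C a fS_class[OF a(1)] S_zero_primes by auto
  qed
  show "Pow {p. prime p} \<subseteq> fS ` (Af // Rel)"
  proof
    fix T :: "nat set" assume T: "T \<in> Pow {p. prime p}"
    have "S_zero (eT T) = T" using S_eT T by auto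
    hence "fS (Rel``{eT T}) = T" using fS_class[OF eT_Af] by simp
    moreover have "Rel``{eT T} \<in> Af // Rel" using eT_Af by (rule quotientI)
    ultimately show "T \<in> fS ` (Af // Rel)" by (rule image_eqI[OF sym])
  qed
qed

lemma fS_inj: "inj_on fS (Af // Rel)"
proof
  fix C D assume C: "C \<in> Af // Rel" and D: "D \<in> Af // Rel" and e: "fS C = fS D"
  obtain a where a: "a \<in> Af" "C = Rel``{a}" using C by (rule classE)
  obtain b where b: "b \<in> Af" "D = Rel``{b}" using D by (rule classE)
  have "S_zero a = S_zero b" using e a b fS_class by simp
  thus "C = D" using a b class_eq by simp
qed

lemma fS_cont: "continuous_map (topology qpred) (topology pcpred) fS"
  unfolding continuous_map_def topspace_Q topspace_PC openin_PC openin_Q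
proof (intro conjI allI impI)
  show "fS \<in> Af // Rel \<rightarrow> Pow {p. prime p}" using fS_image by blast
  fix U assume U: "pcpred U"
  have un: "\<Union>{x \<in> Af // Rel. fS x \<in> U} = {a \<in> Af. S_zero a \<in> U}"
  proof
    show "\<Union>{x \<in> Af // Rel. fS x \<in> U} \<subseteq> {a \<in> Af. S_zero a \<in> U}"
    proof
      fix a assume "a \<in> \<Union>{x \<in> Af // Rel. fS x \<in> U}"
      then obtain C where C: "C \<in> Af // Rel" "fS C \<in> U" "a \<in> C" by blast
      obtain b where b: "b \<in> Af" "C = Rel``{b}" using C(1) by (rule classE)
      have "a \<in> Af" "S_zero a = S_zero b" using C(3) b class_eq by auto
      thus "a \<in> {a \<in> Af. S_zero a \<in> U}" using C(2) fS_class[OF b(1)] b by simp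
    qed
    show "{a \<in> Af. S_zero a \<in> U} \<subseteq> \<Union>{x \<in> Af // Rel. fS x \<in> U}"
    proof
      fix a assume a: "a \<in> {a \<in> Af. S_zero a \<in> U}"
      have "Rel``{a} \<in> Af // Rel" using a by (simp add: quotientI)
      moreover have "fS (Rel``{a}) \<in> U" using a fS_class[of a] by simp
      moreover have "a \<in> Rel``{a}" using a class_eq[of a] by simp
      ultimately show "a \<in> \<Union>{x \<in> Af // Rel. fS x \<in> U}" by blast
    qed
  qed
  have op: "openin Af_top {a \<in> Af. S_zero a \<in> U}"
    unfolding openin_subopen[of Af_top "{a \<in> Af. S_zero a \<in> U}"]
  proof
    fix a assume a: "a \<in> {a \<in> Af. S_zero a \<in> U}"
    obtain G where G: "finite G" "G \<subseteq> {p. prime p}" "S_zero a \<inter> G = {}" "{T' \<in> Pow {p. prime p}. T' \<inter> G = {}} \<subseteq> U"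
      using U by (rule pcpredD) (use a in blast)
    have "a \<in> nzset G" unfolding nzset_def using a G(2,3) unfolding S_zero_def by blast
    moreover have "nzset G \<subseteq> {a \<in> Af. S_zero a \<in> U}"
    proof
      fix x assume x: "x \<in> nzset G"
      hence "S_zero x \<inter> G = {}" "x \<in> Af" unfolding nzset_def S_zero_def by auto
      thus "x \<in> {a \<in> Af. S_zero a \<in> U}" using G(4) S_zero_primes by blast
    qed
    ultimately show "\<exists>T. openin Af_top T \<and> a \<in> T \<and> T \<subseteq> {a \<in> Af. S_zero a \<in> U}"
      using open_nzset[OF G(1,2)] by blast
  qed
  show "qpred {x \<in> Af // Rel. fS x \<in> U}" unfolding qpred_def un using op by blast
qed


lemma realize:
  assumes a: "a \<in> Af" and Ffin: "finite F" and F: "F \<subseteq> {p. prime p}"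
    and eps: "\<forall>p\<in>F. eps p > 0 \<and> {x \<in> Qp p. pnorm p x < eps p} \<subseteq> V p"
    and T': "T' \<subseteq> {p. prime p}" and dis: "\<forall>p\<in>T'. (p \<in> F \<or> a p \<notin> Zp p) \<longrightarrow> a p = pzero p"
  shows "\<exists>n \<in> af_nbhd F V. S_zero (af_add a n) = T'"
proof -
  obtain K where K: "\<forall>p\<in>F. (1/2::real)^K < eps p" using exK[of F eps] Ffin eps by blast
  define n :: adele where "n p = (if prime p then (if p \<in> T' then pneg p (a p)
      else if a p = pzero p then pconst p (of_nat p ^ K) else pzero p) else {})" for p
  have nQ: "n p \<in> Qp p" if p: "prime p" for p
    unfolding n_def using p pneg_in[OF p Af_Qp[OF a p]] pconst_in[OF p] pzero_in[OF p] by simp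
  have nnorm: "pnorm p (n p) \<le> 1 \<and> (p \<in> F \<longrightarrow> pnorm p (n p) < eps p)" if p: "prime p" for p
  proof (cases "p \<in> T'")
    case True
    have e: "pnorm p (n p) = pnorm p (a p)" unfolding n_def using p True pnorm_pneg[OF p Af_Qp[OF a p]] by simp
    show ?thesis
    proof (cases "p \<in> F \<or> a p \<notin> Zp p")
      case True
      hence "a p = pzero p" using dis \<open>p \<in> T'\<close> by blast
      hence "pnorm p (n p) = 0" using e pnorm_zero[OF p] by simp
      thus ?thesis using eps by auto
    next
      case False
      hence "pnorm p (a p) \<le> 1" unfolding Zp_def by simp
      thus ?thesis using e False by simp
    qed
  next
    case nT: False
    show ?thesis
    proof (cases "a p = pzero p")
      case True
      have e: "n p = pconst p (of_nat p ^ K)" unfolding n_def using p nT True by simp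
      have "pnorm p (n p) \<le> (1/2)^K" unfolding e pnorm_const[OF p] using pabs_prime_pow_self[OF p] by simp
      moreover have "(1/2::real)^K \<le> 1" by (simp add: power_le_one)
      ultimately show ?thesis using K by fastforce
    next
      case False
      have e: "n p = pzero p" unfolding n_def using p nT False by simp
      show ?thesis unfolding e pnorm_zero[OF p] using eps by auto
    qed
  qed
  have nZ: "n p \<in> Zp p" if p: "prime p" for p
    unfolding Zp_def using nQ[OF p] nnorm[OF p] by simp
  have nA: "n \<in> Af"
  proof (rule AfI)
    show "\<And>p. prime p \<Longrightarrow> n p \<in> Qp p" by (rule nQ)
    show "\<And>p. \<not> prime p \<Longrightarrow> n p = {}" unfolding n_def by simp
    have "{p. prime p \<and> n p \<notin> Zp p} = {}" using nZ by blast
    thus "finite {p. prime p \<and> n p \<notin> Zp p}" by (simp only: finite.emptyI)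
  qed
  have nN: "n \<in> af_nbhd F V"
    unfolding af_nbhd_def
  proof (intro CollectI conjI nA ballI allI impI)
    fix p assume pF: "p \<in> F"
    hence p: "prime p" using F by blast
    have "n p \<in> {x \<in> Qp p. pnorm p x < eps p}" using nQ[OF p] nnorm[OF p] pF by blast
    thus "n p \<in> V p" using eps pF by blast
  next
    fix p assume "prime p \<and> p \<notin> F" thus "n p \<in> Zp p" using nZ by blast
  qed
  have S: "S_zero (af_add a n) = T'"
  proof -
    have "af_add a n p = pzero p \<longleftrightarrow> p \<in> T'" if p: "prime p" for p
    proof -
      have ap: "af_add a n p = padd p (a p) (n p)" using af_add_prime[OF p] .
      show ?thesis
      proof (cases "p \<in> T'")
        case True
        thus ?thesis unfolding ap n_def using p padd_pneg[OF p Af_Qp[OF a p]] by simp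
      next
        case nT: False
        show ?thesis
        proof (cases "a p = pzero p")
          case True
          have "(of_nat p ^ K :: rat) \<noteq> 0" using p prime_gt_0_nat by simp
          thus ?thesis unfolding ap n_def using p nT True padd_zero_const[OF p] pconst_nonzero[OF p] by simp
        next
          case False
          thus ?thesis unfolding ap n_def using p nT padd_zero_right[OF p Af_Qp[OF a p]] by simp
        qed
      qed
    qed
    thus ?thesis unfolding S_zero_def using T' by blast
  qed
  show ?thesis using nN S by blast
qed

lemma fS_open: "open_map (topology qpred) (topology pcpred) fS"
  unfolding open_map_def openin_Q openin_PC
proof (intro allI impI)
  fix W assume W: "qpred W"
  have Wsub: "W \<subseteq> Af // Rel" and Wop: "openin Af_top (\<Union>W)" using W unfolding qpred_def by auto
  show "pcpred (fS ` W)"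
  proof (rule pcpredI)
    show "fS ` W \<subseteq> Pow {p. prime p}" using fS_image Wsub by blast
    fix X assume "X \<in> fS ` W"
    then obtain C where C: "C \<in> W" "X = fS C" by blast
    obtain a where a: "a \<in> Af" "C = Rel``{a}" using Wsub C(1) by (blast elim: classE)
    have X: "X = S_zero a" using C(2) a fS_class by simp
    have aW: "a \<in> \<Union>W" using C(1) a class_eq by blast
    obtain F V where FV: "finite F" "F \<subseteq> {p. prime p}" "\<forall>p\<in>F. qp_nhd0 p (V p)" "af_add a ` af_nbhd F V \<subseteq> \<Union>W"
      using Wop aW unfolding openin_Af afpred_def by blast
    have "\<forall>p\<in>F. \<exists>e>0. {x \<in> Qp p. pnorm p x < e} \<subseteq> V p" using FV(3) unfolding qp_nhd0_def by blast
    then obtain eps where eps: "\<forall>p\<in>F. eps p > 0 \<and> {x \<in> Qp p. pnorm p x < eps p} \<subseteq> V p"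
      using bchoice[of F "\<lambda>p e. e > 0 \<and> {x \<in> Qp p. pnorm p x < e} \<subseteq> V p"] by blast
    define G where "G = (F \<union> {p. prime p \<and> a p \<notin> Zp p}) - S_zero a"
    have Gfin: "finite G" unfolding G_def using FV(1) Af_fin[OF a(1)] by simp
    have Gpr: "G \<subseteq> {p. prime p}" unfolding G_def using FV(2) by auto
    have XG: "X \<inter> G = {}" unfolding X G_def by blast
    have "{T' \<in> Pow {p. prime p}. T' \<inter> G = {}} \<subseteq> fS ` W"
    proof
      fix T' assume "T' \<in> {T' \<in> Pow {p. prime p}. T' \<inter> G = {}}"
      hence T': "T' \<subseteq> {p. prime p}" "T' \<inter> G = {}" by auto
      have dis: "\<forall>p\<in>T'. (p \<in> F \<or> a p \<notin> Zp p) \<longrightarrow> a p = pzero p"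
      proof (intro ballI impI)
        fix p assume pT: "p \<in> T'" and h: "p \<in> F \<or> a p \<notin> Zp p"
        have "prime p" using pT T'(1) by blast
        hence "p \<in> F \<union> {p. prime p \<and> a p \<notin> Zp p}" using h by blast
        hence "p \<in> S_zero a" using pT T'(2) unfolding G_def by blast
        thus "a p = pzero p" unfolding S_zero_def by blast
      qed
      obtain n where n: "n \<in> af_nbhd F V" "S_zero (af_add a n) = T'"
        using realize[OF a(1) FV(1) FV(2) eps T'(1) dis] by blast
      let ?b = "af_add a n"
      have bA: "?b \<in> Af" using af_add_in[OF a(1)] n(1) af_nbhd_Af by blast
      have "?b \<in> \<Union>W" using FV(4) n(1) by blast
      then obtain D where D: "D \<in> W" "?b \<in> D" by blast
      obtain c where c: "c \<in> Af" "D = Rel``{c}" using Wsub D(1) by (blast elim: classE)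
      have "S_zero ?b = S_zero c" using D(2) c class_eq by blast
      hence "fS D = T'" using c fS_class n(2) by simp
      thus "T' \<in> fS ` W" using D(1) by blast
    qed
    thus "\<exists>G. finite G \<and> G \<subseteq> {p. prime p} \<and> X \<inter> G = {} \<and> {T' \<in> Pow {p. prime p}. T' \<inter> G = {}} \<subseteq> fS ` W"
      using Gfin Gpr XG by blast
  qed
qed

theorem proposition2p4:
  shows "(\<forall>a b. (a, b) \<in> qo_rel Af_top {r::rat. r > 0} div_action \<longrightarrow> S_zero a = S_zero b)
    \<and> homeomorphic_map (quasi_orbit_space Af_top {r::rat. r > 0} div_action) power_cofinite
        (\<lambda>C. S_zero (SOME a. a \<in> C))"
proof
  show "\<forall>a b. (a, b) \<in> qo_rel Af_top {r::rat. r > 0} div_action \<longrightarrow> S_zero a = S_zero b"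
    using qo_rel_iff by blast
  have f: "(\<lambda>C. S_zero (SOME a. a \<in> C)) = fS" unfolding fS_def by (rule refl)
  show "homeomorphic_map (quasi_orbit_space Af_top {r::rat. r > 0} div_action) power_cofinite
        (\<lambda>C. S_zero (SOME a. a \<in> C))"
    unfolding f Q_eq PC_eq
    by (rule bijective_open_imp_homeomorphic_map[OF fS_cont fS_open])
       (simp_all add: topspace_Q topspace_PC fS_image fS_inj)
qed


end
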